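(* Let $\bm A=(A_1,\dots,A_d)$ be Hermitian matrices in $M_n(\mathbb{C})$, $B\in M_n(\mathbb{C})$, and $(\bm\lambda,\nu)\in\mathbb{R}^d\times\mathbb{C}$. Suppose $(\bm\lambda,\nu)\in\dot\Lambda^{C}_{\epsilon_1}(\bm A,B)$ for some $\epsilon_1\ge0$, and that $$\sum_{i\neq k}\|[A_i,A_k]\|+\|F_{(\bm\lambda,\nu)}(\bm A,B)\|\le\epsilon_2$$ for some $\epsilon_2\ge0$. Then there is a unit vector $\bm\psi\in\mathbb{C}^n$ such that either $$\sqrt{\sum_{i=1}^d\|A_i\bm\psi-\lambda_i\bm\psi\|^2+\|B\bm\psi-\nu\bm\psi\|^2}\le\sqrt{2m}\,\sqrt{\epsilon_1^2+\epsilon_2}$$ or $$\sqrt{\sum_{i=1}^d\|A_i\bm\psi-\lambda_i\bm\psi\|^2+\|B^\dagger\bm\psi-\overline{\nu}\bm\psi\|^2}\le\sqrt{2m}\,\sqrt{\epsilon_1^2+\epsilon_2}.$$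
   Context: Let $n,d,m$ be positive integers. Fix Hermitian matrices $\Gamma_1,\dots,\Gamma_d\in M_{2m}(\mathbb{C})$ with $\Gamma_i^2=I_{2m}$ and $\Gamma_i\Gamma_j=-\Gamma_j\Gamma_i$ for $i\neq j$ (a Clifford representation; the paper uses a specific one built from Pauli matrices). Write $P=\begin{bmatrix} I_m&0\\0&0_m\end{bmatrix}$ and $Q=\begin{bmatrix}0_m&0\\0&I_m\end{bmatrix}$ in $M_{2m}(\mathbb{C})$. For a $d$-tuple $\bm A=(A_1,\dots,A_d)$ of Hermitian matrices in $M_n(\mathbb{C})$, a matrix $B\in M_n(\mathbb{C})$ (not necessarily Hermitian or normal), and a probe site $(\bm\lambda,\nu)\in\mathbb{R}^d\times\mathbb{C}$, the non-Hermitian spectral localizer is $$L_{(\bm\lambda,\nu)}(\bm A,B)=\sum_{i=1}^d (A_i-\lambda_i I)\otimes\Gamma_i+(B-\nu I)\otimes P-(B-\nu I)^\dagger\otimes Q\in M_{2mn}(\mathbb{C}).$$ The Clifford radial gap is $\dot\mu^{C}_{(\bm\lambda,\nu)}(\bm A,B)=\sigma_{\min}\big(L_{(\bm\lambda,\nu)}(\bm A,B)\big)$, and the Clifford radial $\epsilon$-pseudospectrum is $\dot\Lambda^{C}_\epsilon(\bm A,B)=\{(\bm\lambda,\nu)\in\mathbb{R}^d\times\mathbb{C}:\dot\mu^{C}_{(\bm\lambda,\nu)}(\bm A,B)\le\epsilon\}$. Define $$F_{(\bm\lambda,\nu)}(\bm A,B)=\sum_{i=1}^d\big(G_i+G_i^\dagger\big)-\sum_{i=1}^d\big(H_i+H_i^\dagger\big),\quad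 G_i=(A_i-\lambda_i I)(B-\nu I)\otimes\Gamma_iP,\quad H_i=(A_i-\lambda_i I)(B-\nu I)^\dagger\otimes\Gamma_iQ.$$ All matrix norms are operator norms; vector norms are Euclidean. *)

theory Defs
  imports Complex_Main "Jordan_Normal_Form.Matrix"
begin

definition adj :: "complex mat \<Rightarrow> complex mat" where
  "adj M = mat (dim_col M) (dim_row M) (\<lambda>(i,j). cnj (M $$ (j,i)))"

definition hermitian :: "complex mat \<Rightarrow> bool" where
  "hermitian M \<longleftrightarrow> dim_row M = dim_col M \<and> adj M = M"

definition kron :: "complex mat \<Rightarrow> complex mat \<Rightarrow> complex mat" where
  "kron X Y = mat (dim_row X * dim_row Y) (dim_col X * dim_col Y)
     (\<lambda>(i,j). X $$ (i div dim_row Y, j div dim_col Y) * Y $$ (i mod dim_row Y, j mod dim_col Y))"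

definition msum :: "nat \<Rightarrow> (nat \<Rightarrow> complex mat) \<Rightarrow> nat set \<Rightarrow> complex mat" where
  "msum N f I = mat N N (\<lambda>p. \<Sum>i\<in>I. f i $$ p)"

definition vnorm :: "complex vec \<Rightarrow> real" where
  "vnorm v = sqrt (\<Sum>i<dim_vec v. (cmod (v $ i))\<^sup>2)"

definition opnorm :: "complex mat \<Rightarrow> real" where
  "opnorm M = Sup {vnorm (M *\<^sub>v v) | v. v \<in> carrier_vec (dim_col M) \<and> vnorm v = 1}"

definition sigma_min :: "complex mat \<Rightarrow> real" where
  "sigma_min M = Inf {vnorm (M *\<^sub>v v) | v. v \<in> carrier_vec (dim_col M) \<and> vnorm v = 1}"

text \<open>Clifford representation Gamma 0..d-1 of Hermitian 2m x 2m matrices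
  (paper indices 1..d are shifted to 0..d-1).\<close>
definition clifford_rep :: "nat \<Rightarrow> nat \<Rightarrow> (nat \<Rightarrow> complex mat) \<Rightarrow> bool" where
  "clifford_rep m d \<Gamma> \<longleftrightarrow>
     (\<forall>i<d. \<Gamma> i \<in> carrier_mat (2*m) (2*m) \<and> hermitian (\<Gamma> i) \<and> \<Gamma> i * \<Gamma> i = 1\<^sub>m (2*m)) \<and>
     (\<forall>i<d. \<forall>j<d. i \<noteq> j \<longrightarrow> \<Gamma> i * \<Gamma> j = - (\<Gamma> j * \<Gamma> i))"

definition Pm :: "nat \<Rightarrow> complex mat" where
  "Pm m = mat (2*m) (2*m) (\<lambda>(i,j). if i = j \<and> i < m then 1 else 0)"

definition Qm :: "nat \<Rightarrow> complex mat" where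
  "Qm m = mat (2*m) (2*m) (\<lambda>(i,j). if i = j \<and> m \<le> i then 1 else 0)"

definition shiftA :: "nat \<Rightarrow> (nat \<Rightarrow> complex mat) \<Rightarrow> (nat \<Rightarrow> real) \<Rightarrow> nat \<Rightarrow> complex mat" where
  "shiftA n A lam i = A i - complex_of_real (lam i) \<cdot>\<^sub>m 1\<^sub>m n"

definition shiftB :: "nat \<Rightarrow> complex mat \<Rightarrow> complex \<Rightarrow> complex mat" where
  "shiftB n B \<nu> = B - \<nu> \<cdot>\<^sub>m 1\<^sub>m n"

definition localizer ::
  "nat \<Rightarrow> nat \<Rightarrow> nat \<Rightarrow> (nat \<Rightarrow> complex mat) \<Rightarrow> (nat \<Rightarrow> complex mat) \<Rightarrow> complex mat
   \<Rightarrow> (nat \<Rightarrow> real) \<Rightarrow> complex \<Rightarrow> complex mat" where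
  "localizer n d m \<Gamma> A B lam \<nu> =
     msum (2*m*n) (\<lambda>i. kron (shiftA n A lam i) (\<Gamma> i)) {..<d}
     + kron (shiftB n B \<nu>) (Pm m) - kron (adj (shiftB n B \<nu>)) (Qm m)"

definition clifford_radial_gap ::
  "nat \<Rightarrow> nat \<Rightarrow> nat \<Rightarrow> (nat \<Rightarrow> complex mat) \<Rightarrow> (nat \<Rightarrow> complex mat) \<Rightarrow> complex mat
   \<Rightarrow> (nat \<Rightarrow> real) \<Rightarrow> complex \<Rightarrow> real" where
  "clifford_radial_gap n d m \<Gamma> A B lam \<nu> = sigma_min (localizer n d m \<Gamma> A B lam \<nu>)"

text \<open>Clifford radial epsilon-pseudospectrum; probe sites are pairs (lambda, nu),
  where lambda only matters on 0..d-1 (we require it to vanish elsewhere).\<close>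
definition clifford_pseudospectrum ::
  "nat \<Rightarrow> nat \<Rightarrow> nat \<Rightarrow> (nat \<Rightarrow> complex mat) \<Rightarrow> real \<Rightarrow> (nat \<Rightarrow> complex mat) \<Rightarrow> complex mat
   \<Rightarrow> ((nat \<Rightarrow> real) \<times> complex) set" where
  "clifford_pseudospectrum n d m \<Gamma> \<epsilon> A B =
     {(lam, \<nu>). (\<forall>i\<ge>d. lam i = 0) \<and> clifford_radial_gap n d m \<Gamma> A B lam \<nu> \<le> \<epsilon>}"

definition Fmat ::
  "nat \<Rightarrow> nat \<Rightarrow> nat \<Rightarrow> (nat \<Rightarrow> complex mat) \<Rightarrow> (nat \<Rightarrow> complex mat) \<Rightarrow> complex mat
   \<Rightarrow> (nat \<Rightarrow> real) \<Rightarrow> complex \<Rightarrow> complex mat" where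
  "Fmat n d m \<Gamma> A B lam \<nu> =
     (let G = (\<lambda>i. kron (shiftA n A lam i * shiftB n B \<nu>) (\<Gamma> i * Pm m));
          H = (\<lambda>i. kron (shiftA n A lam i * adj (shiftB n B \<nu>)) (\<Gamma> i * Qm m))
      in msum (2*m*n) (\<lambda>i. G i + adj (G i)) {..<d} - msum (2*m*n) (\<lambda>i. H i + adj (H i)) {..<d})"

end

theory Submission
  imports Defs "HOL-Analysis.L2_Norm" "Jordan_Normal_Form.Determinant"
begin

definition ipv :: "complex vec \<Rightarrow> complex vec \<Rightarrow> complex" where
  "ipv u w = (\<Sum>i<dim_vec w. cnj (u$i) * w$i)"

lemma vnorm_sq: "(vnorm w)\<^sup>2 = (\<Sum>i<dim_vec w. (cmod (w $ i))\<^sup>2)"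
  unfolding vnorm_def by (simp add: sum_nonneg)

lemma vnorm_nonneg: "vnorm w \<ge> 0"
  unfolding vnorm_def by (simp add: sum_nonneg)

lemma ipv_self: "ipv w w = complex_of_real ((vnorm w)\<^sup>2)"
  unfolding ipv_def vnorm_sq of_real_sum
  by (rule sum.cong, simp, metis complex_norm_square mult.commute)

lemma ipv_cnj: assumes "dim_vec u = dim_vec w" shows "cnj (ipv u w) = ipv w u"
  unfolding ipv_def using assms by (simp add: mult.commute)

lemma real_cs: fixes f g :: "nat \<Rightarrow> real"
  shows "(\<Sum>i\<in>A. \<bar>f i\<bar> * \<bar>g i\<bar>)\<^sup>2 \<le> (\<Sum>i\<in>A. (f i)\<^sup>2) * (\<Sum>i\<in>A. (g i)\<^sup>2)"
proof -
  have "(\<Sum>i\<in>A. \<bar>f i\<bar> * \<bar>g i\<bar>) \<le> L2_set f A * L2_set g A" by (rule L2_set_mult_ineq)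
  moreover have "0 \<le> (\<Sum>i\<in>A. \<bar>f i\<bar> * \<bar>g i\<bar>)" by (simp add: sum_nonneg)
  ultimately have "(\<Sum>i\<in>A. \<bar>f i\<bar> * \<bar>g i\<bar>)\<^sup>2 \<le> (L2_set f A * L2_set g A)\<^sup>2"
    by (simp add: power_mono)
  also have "\<dots> = (\<Sum>i\<in>A. (f i)\<^sup>2) * (\<Sum>i\<in>A. (g i)\<^sup>2)"
    unfolding L2_set_def power_mult_distrib by (simp add: sum_nonneg)
  finally show ?thesis .
qed

lemma complex_cs: fixes a b :: "nat \<Rightarrow> complex"
  shows "(cmod (\<Sum>i\<in>A. a i * b i))\<^sup>2 \<le> (\<Sum>i\<in>A. (cmod (a i))\<^sup>2) * (\<Sum>i\<in>A. (cmod (b i))\<^sup>2)"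
proof -
  have "cmod (\<Sum>i\<in>A. a i * b i) \<le> (\<Sum>i\<in>A. \<bar>cmod (a i)\<bar> * \<bar>cmod (b i)\<bar>)"
    using norm_sum[of "\<lambda>i. a i * b i" A] by (simp add: norm_mult)
  hence "(cmod (\<Sum>i\<in>A. a i * b i))\<^sup>2 \<le> (\<Sum>i\<in>A. \<bar>cmod (a i)\<bar> * \<bar>cmod (b i)\<bar>)\<^sup>2"
    by (simp add: power_mono)
  also have "\<dots> \<le> (\<Sum>i\<in>A. (cmod (a i))\<^sup>2) * (\<Sum>i\<in>A. (cmod (b i))\<^sup>2)"
    by (rule real_cs)
  finally show ?thesis .
qed

lemma ipv_cs: assumes "dim_vec u = dim_vec w"
  shows "cmod (ipv u w) \<le> vnorm u * vnorm w"
proof -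
  have "(cmod (ipv u w))\<^sup>2 \<le> (vnorm u)\<^sup>2 * (vnorm w)\<^sup>2"
    unfolding ipv_def vnorm_sq using complex_cs[of "\<lambda>i. cnj (u$i)" "\<lambda>i. w$i"] assms by simp
  also have "\<dots> = (vnorm u * vnorm w)\<^sup>2" by (simp add: power_mult_distrib)
  finally have *: "(cmod (ipv u w))\<^sup>2 \<le> (vnorm u * vnorm w)\<^sup>2" .
  have "0 \<le> vnorm u * vnorm w" using vnorm_nonneg by simp
  thus ?thesis by (rule power2_le_imp_le[OF *])
qed

lemma vnorm_smult: "vnorm (c \<cdot>\<^sub>v w) = cmod c * vnorm w"
proof -
  have "(vnorm (c \<cdot>\<^sub>v w))\<^sup>2 = (cmod c * vnorm w)\<^sup>2"
    unfolding vnorm_sq power_mult_distrib by (simp add: norm_mult power_mult_distrib sum_distrib_left)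
  moreover have "0 \<le> cmod c * vnorm w" using vnorm_nonneg by simp
  ultimately show ?thesis using vnorm_nonneg by (simp add: power2_eq_imp_eq)
qed

lemma vnorm_zero: assumes "vnorm w = 0" shows "w = 0\<^sub>v (dim_vec w)"
proof -
  have "(\<Sum>i<dim_vec w. (cmod (w $ i))\<^sup>2) = 0" using assms vnorm_sq[of w] by simp
  hence "\<forall>i\<in>{..<dim_vec w}. (cmod (w $ i))\<^sup>2 = 0"
    by (subst (asm) sum_nonneg_eq_0_iff) auto
  thus ?thesis by (intro eq_vecI) auto
qed

definition frob :: "complex mat \<Rightarrow> real" where
  "frob M = sqrt (\<Sum>i<dim_row M. \<Sum>j<dim_col M. (cmod (M $$ (i,j)))\<^sup>2)"

lemma frob_bound: assumes "w \<in> carrier_vec (dim_col M)"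
  shows "vnorm (M *\<^sub>v w) \<le> frob M * vnorm w"
proof -
  have "(vnorm (M *\<^sub>v w))\<^sup>2 = (\<Sum>i<dim_row M. (cmod (\<Sum>j<dim_col M. M $$ (i,j) * w $ j))\<^sup>2)"
    unfolding vnorm_sq using assms
    by (intro sum.cong) (auto simp: scalar_prod_def atLeast0LessThan)
  also have "\<dots> \<le> (\<Sum>i<dim_row M. (\<Sum>j<dim_col M. (cmod (M $$ (i,j)))\<^sup>2) * (\<Sum>j<dim_col M. (cmod (w $ j))\<^sup>2))"
    by (intro sum_mono complex_cs)
  also have "\<dots> = (frob M * vnorm w)\<^sup>2"
    unfolding power_mult_distrib frob_def vnorm_sq using assms
    by (simp add: sum_distrib_right sum_nonneg)
  finally have *: "(vnorm (M *\<^sub>v w))\<^sup>2 \<le> (frob M * vnorm w)\<^sup>2" .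
  have "0 \<le> frob M" unfolding frob_def by (simp add: sum_nonneg)
  hence "0 \<le> frob M * vnorm w" using vnorm_nonneg by simp
  thus ?thesis by (rule power2_le_imp_le[OF *])
qed

lemma opnorm_bound: assumes "w \<in> carrier_vec (dim_col M)"
  shows "vnorm (M *\<^sub>v w) \<le> opnorm M * vnorm w"
proof (cases "vnorm w = 0")
  case True
  hence "w = 0\<^sub>v (dim_col M)" using vnorm_zero assms by fastforce
  hence "M *\<^sub>v w = 0\<^sub>v (dim_row M)" by auto
  hence "vnorm (M *\<^sub>v w) = 0" unfolding vnorm_def by simp
  thus ?thesis using True by simp
next
  case False
  hence pos: "vnorm w > 0" using vnorm_nonneg[of w] by linarith
  define u where "u = complex_of_real (1 / vnorm w) \<cdot>\<^sub>v w"
  have u: "u \<in> carrier_vec (dim_col M)" "vnorm u = 1"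
    using assms pos unfolding u_def by (auto simp: vnorm_smult norm_divide)
  have Mu: "M *\<^sub>v u = complex_of_real (1 / vnorm w) \<cdot>\<^sub>v (M *\<^sub>v w)"
    unfolding u_def using assms by (metis carrier_matI mult_mat_vec carrier_vecD)
  have bdd: "bdd_above {vnorm (M *\<^sub>v v) | v. v \<in> carrier_vec (dim_col M) \<and> vnorm v = 1}"
    by (rule bdd_aboveI[of _ "frob M"]) (use frob_bound in fastforce)
  have "vnorm (M *\<^sub>v u) \<le> opnorm M" unfolding opnorm_def
    by (rule cSup_upper[OF _ bdd]) (use u in blast)
  hence "vnorm (M *\<^sub>v w) / vnorm w \<le> opnorm M" unfolding Mu vnorm_smult using pos by (simp add: norm_divide)
  thus ?thesis using pos by (simp add: divide_le_eq mult.commute)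
qed

lemma sum_split: "(\<Sum>p<(n::nat)*k. f p) = (\<Sum>b<n. \<Sum>l<k. f (b*k+l) :: 'a :: comm_monoid_add)"
proof (induction n)
  case 0 then show ?case by simp
next
  case (Suc n)
  have "(\<Sum>p<Suc n*k. f p) = (\<Sum>p<n*k. f p) + (\<Sum>l<k. f (n*k+l))"
  proof -
    have "\<And>j. (\<Sum>p<n*k+j. f p) = (\<Sum>p<n*k. f p) + (\<Sum>l<j. f (n*k+l))"
      subgoal for j by (induction j) (auto simp: add_ac)
      done
    thus ?thesis by (simp add: add.commute)
  qed
  then show ?case using Suc by simp
qed

lemma kron_carrier: "X \<in> carrier_mat n n \<Longrightarrow> Y \<in> carrier_mat k k \<Longrightarrow> kron X Y \<in> carrier_mat (n*k) (n*k)"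
  unfolding kron_def by auto

lemma divmod_k: "j < (k::nat) \<Longrightarrow> (a*k+j) div k = a \<and> (a*k+j) mod k = j"
  by auto

lemma lt_nk: "a < n \<Longrightarrow> j < (k::nat) \<Longrightarrow> a*k+j < n*k"
proof -
  assume "a < n" "j < k"
  hence "a*k+j < a*k + k" by simp
  also have "\<dots> = Suc a * k" by simp
  also have "\<dots> \<le> n*k" using \<open>a<n\<close> by (intro mult_right_mono) auto
  finally show ?thesis .
qed

lemma kron_apply:
  assumes X: "X \<in> carrier_mat n n" and Y: "Y \<in> carrier_mat k k" and v: "v \<in> carrier_vec (n*k)"
    and a: "a < n" and j: "j < k"
  shows "(kron X Y *\<^sub>v v) $ (a*k+j) = (\<Sum>b<n. \<Sum>l<k. X$$(a,b) * Y$$(j,l) * v$(b*k+l))"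
proof -
  have ak: "a*k+j < n*k" using lt_nk[OF a j] .
  have "(kron X Y *\<^sub>v v) $ (a*k+j) = (\<Sum>p<n*k. kron X Y $$ (a*k+j, p) * v$p)"
    using X Y v ak by (simp add: kron_def scalar_prod_def atLeast0LessThan)
  also have "\<dots> = (\<Sum>b<n. \<Sum>l<k. kron X Y $$ (a*k+j, b*k+l) * v$(b*k+l))"
    by (rule sum_split)
  also have "\<dots> = (\<Sum>b<n. \<Sum>l<k. X$$(a,b) * Y$$(j,l) * v$(b*k+l))"
    using X Y ak j by (intro sum.cong refl) (auto simp: kron_def lt_nk)
  finally show ?thesis .
qed

lemma perm6: fixes F :: "nat \<Rightarrow> nat \<Rightarrow> nat \<Rightarrow> nat \<Rightarrow> nat \<Rightarrow> nat \<Rightarrow> 'a::comm_monoid_add"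
  shows "(\<Sum>a\<in>A. \<Sum>j\<in>J. \<Sum>b\<in>B. \<Sum>l\<in>L. \<Sum>b'\<in>B. \<Sum>l'\<in>L. F a j b l b' l')
       = (\<Sum>l\<in>L. \<Sum>l'\<in>L. \<Sum>b\<in>B. \<Sum>b'\<in>B. \<Sum>j\<in>J. \<Sum>a\<in>A. F a j b l b' l')"
  unfolding sum.cartesian_product
  apply (rule sum.reindex_bij_witness[where i="\<lambda>(l,l',b,b',j,a). (a,j,b,l,b',l')" and j="\<lambda>(a,j,b,l,b',l'). (l,l',b,b',j,a)"])
  by auto


lemma adj_carrier: "X \<in> carrier_mat r c \<Longrightarrow> adj X \<in> carrier_mat c r"
  unfolding adj_def by auto

lemma adj_index: "X \<in> carrier_mat r c \<Longrightarrow> i < c \<Longrightarrow> j < r \<Longrightarrow> adj X $$ (i,j) = cnj (X $$ (j,i))"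
  unfolding adj_def by auto

lemma adj_dims[simp]: "dim_row (adj X) = dim_col X" "dim_col (adj X) = dim_row X"
  unfolding adj_def by auto

lemma adj_mult_index: assumes "X \<in> carrier_mat r c" "Z \<in> carrier_mat r c'" "b < c" "b' < c'"
  shows "(adj X * Z) $$ (b,b') = (\<Sum>a<r. cnj (X$$(a,b)) * Z$$(a,b'))"
  using assms by (simp add: scalar_prod_def atLeast0LessThan adj_index)

definition bf :: "nat \<Rightarrow> nat \<Rightarrow> complex vec \<Rightarrow> complex mat \<Rightarrow> complex mat \<Rightarrow> complex" where
  "bf n k v M W = (\<Sum>l<k. \<Sum>l'<k. \<Sum>b<n. \<Sum>b'<n. W$$(l,l') * (cnj (v$(b*k+l)) * M$$(b,b') * v$(b'*k+l')))"

lemma ip_kron: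
  assumes X: "X \<in> carrier_mat n n" and Z: "Z \<in> carrier_mat n n"
    and Y: "Y \<in> carrier_mat k k" and W: "W \<in> carrier_mat k k" and v: "v \<in> carrier_vec (n*k)"
  shows "ipv (kron X Y *\<^sub>v v) (kron Z W *\<^sub>v v) = bf n k v (adj X * Z) (adj Y * W)"
proof -
  let ?F = "\<lambda>a j b l b' l'. cnj (X$$(a,b) * Y$$(j,l) * v$(b*k+l)) * (Z$$(a,b') * W$$(j,l') * v$(b'*k+l'))"
  have "ipv (kron X Y *\<^sub>v v) (kron Z W *\<^sub>v v)
      = (\<Sum>p<n*k. cnj ((kron X Y *\<^sub>v v) $ p) * (kron Z W *\<^sub>v v) $ p)"
    unfolding ipv_def using kron_carrier[OF Z W] by simp
  also have "\<dots> = (\<Sum>a<n. \<Sum>j<k. cnj ((kron X Y *\<^sub>v v) $ (a*k+j)) * (kron Z W *\<^sub>v v) $ (a*k+j))"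
    by (rule sum_split)
  also have "\<dots> = (\<Sum>a<n. \<Sum>j<k. cnj (\<Sum>b<n. \<Sum>l<k. X$$(a,b) * Y$$(j,l) * v$(b*k+l))
                                 * (\<Sum>b'<n. \<Sum>l'<k. Z$$(a,b') * W$$(j,l') * v$(b'*k+l')))"
    by (intro sum.cong refl) (simp add: kron_apply[OF X Y v] kron_apply[OF Z W v])
  also have "\<dots> = (\<Sum>a<n. \<Sum>j<k. \<Sum>b<n. \<Sum>l<k. \<Sum>b'<n. \<Sum>l'<k. ?F a j b l b' l')"
    apply (simp only: cnj_sum sum_distrib_right)
    by (simp only: sum_distrib_left)
  also have "\<dots> = (\<Sum>l<k. \<Sum>l'<k. \<Sum>b<n. \<Sum>b'<n. \<Sum>j<k. \<Sum>a<n. ?F a j b l b' l')"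
    by (rule perm6)
  also have "\<dots> = bf n k v (adj X * Z) (adj Y * W)"
    unfolding bf_def
  proof (intro sum.cong refl)
    fix l l' b b' assume "l \<in> {..<k}" "l' \<in> {..<k}" "b \<in> {..<n}" "b' \<in> {..<n}"
    hence e1: "(adj Y * W)$$(l,l') = (\<Sum>j<k. cnj (Y$$(j,l)) * W$$(j,l'))"
      and e2: "(adj X * Z)$$(b,b') = (\<Sum>a<n. cnj (X$$(a,b)) * Z$$(a,b'))"
      using adj_mult_index[OF X Z] adj_mult_index[OF Y W] by auto
    show "(\<Sum>j<k. \<Sum>a<n. ?F a j b l b' l') = (adj Y * W)$$(l,l') * (cnj (v$(b*k+l)) * (adj X * Z)$$(b,b') * v$(b'*k+l'))"
      unfolding e1 e2
      apply (simp only: sum_distrib_right)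
      apply (simp only: sum_distrib_left sum_distrib_right)
      by (intro sum.cong refl) (simp add: mult_ac)
  qed
  finally show ?thesis .
qed

definition blk :: "nat \<Rightarrow> nat \<Rightarrow> complex vec \<Rightarrow> nat \<Rightarrow> complex vec" where
  "blk n k v l = vec n (\<lambda>b. v$(b*k+l))"

lemma blk_carrier[simp]: "blk n k v l \<in> carrier_vec n"
  unfolding blk_def by simp

lemma perm3: fixes F :: "nat \<Rightarrow> nat \<Rightarrow> nat \<Rightarrow> 'a::comm_monoid_add"
  shows "(\<Sum>a\<in>A. \<Sum>b\<in>B. \<Sum>b'\<in>B. F a b b') = (\<Sum>b\<in>B. \<Sum>b'\<in>B. \<Sum>a\<in>A. F a b b')"
  unfolding sum.cartesian_product
  apply (rule sum.reindex_bij_witness[where i="\<lambda>(b,b',a). (a,b,b')" and j="\<lambda>(a,b,b'). (b,b',a)"])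
  by auto

lemma bf_diag:
  assumes X: "X \<in> carrier_mat n n" and Z: "Z \<in> carrier_mat n n" and v: "v \<in> carrier_vec (n*k)"
  shows "bf n k v (adj X * Z) (mat k k (\<lambda>(l,l'). if l = l' then d l else 0))
       = (\<Sum>l<k. d l * ipv (X *\<^sub>v blk n k v l) (Z *\<^sub>v blk n k v l))"
  unfolding bf_def
proof (intro sum.cong refl)
  fix l assume l: "l \<in> {..<k}"
  let ?G = "\<lambda>l'. (\<Sum>b<n. \<Sum>b'<n. cnj (v$(b*k+l)) * (adj X * Z)$$(b,b') * v$(b'*k+l'))"
  have "(\<Sum>l'<k. \<Sum>b<n. \<Sum>b'<n. mat k k (\<lambda>(l,l'). if l = l' then d l else 0) $$ (l,l')
          * (cnj (v$(b*k+l)) * (adj X * Z)$$(b,b') * v$(b'*k+l')))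
      = (\<Sum>l'<k. (if l = l' then d l else 0) * ?G l')"
    by (intro sum.cong refl) (use l in \<open>simp add: sum_distrib_left\<close>)
  also have "\<dots> = (\<Sum>l'<k. if l = l' then d l * ?G l else 0)" by (intro sum.cong refl) auto
  also have "\<dots> = d l * ?G l" using l by simp
  also have "?G l = ipv (X *\<^sub>v blk n k v l) (Z *\<^sub>v blk n k v l)"
  proof -
    have "?G l = (\<Sum>b<n. \<Sum>b'<n. \<Sum>a<n. cnj (X$$(a,b) * v$(b*k+l)) * (Z$$(a,b') * v$(b'*k+l)))"
      using adj_mult_index[OF X Z]
      by (intro sum.cong refl) (simp add: sum_distrib_left sum_distrib_right mult_ac)
    also have "\<dots> = (\<Sum>a<n. \<Sum>b<n. \<Sum>b'<n. cnj (X$$(a,b) * v$(b*k+l)) * (Z$$(a,b') * v$(b'*k+l)))"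
      by (rule perm3[symmetric])
    also have "\<dots> = ipv (X *\<^sub>v blk n k v l) (Z *\<^sub>v blk n k v l)"
      unfolding ipv_def using X Z
      apply (simp add: scalar_prod_def atLeast0LessThan blk_def)
      apply (intro sum.cong refl)
      apply (simp only: cnj_sum sum_distrib_right)
      by (simp only: sum_distrib_left)
    finally show ?thesis .
  qed
  finally show "(\<Sum>l'<k. \<Sum>b<n. \<Sum>b'<n. mat k k (\<lambda>(l,l'). if l = l' then d l else 0) $$ (l,l')
          * (cnj (v$(b*k+l)) * (adj X * Z)$$(b,b') * v$(b'*k+l')))
      = d l * ipv (X *\<^sub>v blk n k v l) (Z *\<^sub>v blk n k v l)" .
qed

lemma kron_one: assumes "0 < k" shows "kron (1\<^sub>m n) (1\<^sub>m k) = 1\<^sub>m (n*k)"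
proof (rule eq_matI)
  fix i j assume "i < dim_row (1\<^sub>m (n*k))" "j < dim_col (1\<^sub>m (n*k))"
  hence ij: "i < n*k" "j < n*k" by auto
  hence "i div k < n" "j div k < n" by (auto simp: less_mult_imp_div_less)
  moreover have "i mod k < k" "j mod k < k" using assms by auto
  moreover have "(i div k = j div k \<and> i mod k = j mod k) = (i = j)"
    by (metis div_mult_mod_eq)
  ultimately show "kron (1\<^sub>m n) (1\<^sub>m k) $$ (i,j) = 1\<^sub>m (n*k) $$ (i,j)"
    using ij unfolding kron_def by auto
qed (auto simp: kron_def)

lemma adj_one: "adj (1\<^sub>m n) = 1\<^sub>m n"
  by (rule eq_matI) (auto simp: adj_def)

lemma ipv_kron1:
  assumes M: "M \<in> carrier_mat n n" and W: "W \<in> carrier_mat k k" and v: "v \<in> carrier_vec (n*k)" and k: "0 < k"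
  shows "ipv v (kron M W *\<^sub>v v) = bf n k v M W"
proof -
  have "ipv v (kron M W *\<^sub>v v) = ipv (kron (1\<^sub>m n) (1\<^sub>m k) *\<^sub>v v) (kron M W *\<^sub>v v)"
    using v by (simp add: kron_one[OF k])
  also have "\<dots> = bf n k v (adj (1\<^sub>m n) * M) (adj (1\<^sub>m k) * W)"
    by (rule ip_kron) (use M W v in auto)
  finally show ?thesis using M W by (simp add: adj_one)
qed

lemma ipv_self_blk:
  assumes v: "v \<in> carrier_vec (n*k)" and k: "0 < k"
  shows "ipv v v = (\<Sum>l<k. ipv (blk n k v l) (blk n k v l))"
proof -
  have "ipv v v = ipv v (kron (1\<^sub>m n) (1\<^sub>m k) *\<^sub>v v)" using v by (simp add: kron_one[OF k])
  also have "\<dots> = bf n k v (adj (1\<^sub>m n) * 1\<^sub>m n) (1\<^sub>m k)"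
    using ipv_kron1[OF _ _ v k] by (simp add: adj_one)
  also have "1\<^sub>m k = mat k k (\<lambda>(l,l'). if l = l' then (\<lambda>_. 1) l else 0)"
    unfolding one_mat_def by simp
  also have "bf n k v (adj (1\<^sub>m n) * 1\<^sub>m n) \<dots> = (\<Sum>l<k. 1 * ipv (1\<^sub>m n *\<^sub>v blk n k v l) (1\<^sub>m n *\<^sub>v blk n k v l))"
    by (rule bf_diag) (use v in auto)
  finally show ?thesis by simp
qed

lemma bf_minus1: assumes "M1 \<in> carrier_mat n n" "M2 \<in> carrier_mat n n"
  shows "bf n k v (M1 - M2) W = bf n k v M1 W - bf n k v M2 W"
  unfolding bf_def using assms
  by (simp add: sum_subtractf[symmetric] algebra_simps)

lemma bf_uminus2: assumes "W \<in> carrier_mat k k"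
  shows "bf n k v M (- W) = - bf n k v M W"
  unfolding bf_def using assms
  by (simp add: sum_negf[symmetric])

lemma bf_zero2: "bf n k v M (0\<^sub>m k k) = 0"
  unfolding bf_def by simp

lemma adj_adj: "adj (adj X) = X"
  by (rule eq_matI) (auto simp: adj_def)

lemma adj_mult: assumes X: "X \<in> carrier_mat r c" and Y: "Y \<in> carrier_mat c s"
  shows "adj (X * Y) = adj Y * adj X"
  using X Y by (intro eq_matI) (auto simp: adj_def scalar_prod_def cnj_sum mult.commute)

lemma ipv_adj: assumes M: "M \<in> carrier_mat r c" and u: "u \<in> carrier_vec c" and w: "w \<in> carrier_vec r"
  shows "ipv u (adj M *\<^sub>v w) = ipv (M *\<^sub>v u) w"
proof -
  have "ipv u (adj M *\<^sub>v w) = (\<Sum>j<c. \<Sum>i<r. cnj (u$j) * (cnj (M$$(i,j)) * w$i))"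
    unfolding ipv_def using M u w
    by (intro sum.cong refl) (auto simp: adj_def scalar_prod_def atLeast0LessThan sum_distrib_left mult_ac)
  also have "\<dots> = (\<Sum>i<r. \<Sum>j<c. cnj (u$j) * (cnj (M$$(i,j)) * w$i))" by (rule sum.swap)
  also have "\<dots> = ipv (M *\<^sub>v u) w"
    unfolding ipv_def using M u w
    by (intro sum.cong refl) (auto simp: scalar_prod_def atLeast0LessThan sum_distrib_left sum_distrib_right cnj_sum mult_ac)
  finally show ?thesis .
qed

lemma shift_index: fixes X :: "complex mat" assumes "X \<in> carrier_mat n n" "a < n" "b < n"
  shows "(X - c \<cdot>\<^sub>m 1\<^sub>m n) $$ (a,b) = X $$ (a,b) - (if a = b then c else 0)"
  using assms by auto

lemma shift_mult_index: fixes X Y :: "complex mat" assumes X: "X \<in> carrier_mat n n" and Y: "Y \<in> carrier_mat n n" and a: "a < n" and b: "b < n"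
  shows "((X - c \<cdot>\<^sub>m 1\<^sub>m n) * (Y - e \<cdot>\<^sub>m 1\<^sub>m n)) $$ (a,b)
     = (X * Y) $$ (a,b) - e * X $$ (a,b) - c * Y $$ (a,b) + (if a = b then c * e else 0)"
proof -
  have "((X - c \<cdot>\<^sub>m 1\<^sub>m n) * (Y - e \<cdot>\<^sub>m 1\<^sub>m n)) $$ (a,b)
      = (\<Sum>j<n. (X $$ (a,j) - c * (if a = j then 1 else 0)) * (Y $$ (j,b) - e * (if j = b then 1 else 0)))"
    using X Y a b by (simp add: scalar_prod_def atLeast0LessThan)
  also have "\<dots> = (\<Sum>j<n. X $$ (a,j) * Y $$ (j,b)) - (\<Sum>j<n. if j = b then e * X $$ (a,j) else 0)
      - (\<Sum>j<n. if a = j then c * Y $$ (j,b) else 0) + (\<Sum>j<n. if a = j then (if j = b then c * e else 0) else 0)"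
    apply (simp only: sum_subtractf[symmetric] sum.distrib[symmetric])
    by (intro sum.cong refl) (auto simp: algebra_simps)
  also have "\<dots> = (X * Y) $$ (a,b) - e * X $$ (a,b) - c * Y $$ (a,b) + (if a = b then c * e else 0)"
    using X Y a b by (simp add: scalar_prod_def atLeast0LessThan)
  finally show ?thesis .
qed

lemma shift_comm: fixes X Y :: "complex mat" assumes X: "X \<in> carrier_mat n n" and Y: "Y \<in> carrier_mat n n"
  shows "(X - c \<cdot>\<^sub>m 1\<^sub>m n) * (Y - e \<cdot>\<^sub>m 1\<^sub>m n) - (Y - e \<cdot>\<^sub>m 1\<^sub>m n) * (X - c \<cdot>\<^sub>m 1\<^sub>m n) = X * Y - Y * X"
proof (rule eq_matI)
  fix i j assume "i < dim_row (X * Y - Y * X)" "j < dim_col (X * Y - Y * X)"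
  hence ij: "i < n" "j < n" using X Y by auto
  have c: "(X - c \<cdot>\<^sub>m 1\<^sub>m n) * (Y - e \<cdot>\<^sub>m 1\<^sub>m n) \<in> carrier_mat n n"
     "(Y - e \<cdot>\<^sub>m 1\<^sub>m n) * (X - c \<cdot>\<^sub>m 1\<^sub>m n) \<in> carrier_mat n n"
    using X Y by auto
  show "((X - c \<cdot>\<^sub>m 1\<^sub>m n) * (Y - e \<cdot>\<^sub>m 1\<^sub>m n) - (Y - e \<cdot>\<^sub>m 1\<^sub>m n) * (X - c \<cdot>\<^sub>m 1\<^sub>m n)) $$ (i,j) = (X * Y - Y * X) $$ (i,j)"
    using c ij X Y
    apply (subst index_minus_mat, (auto)[2])
    apply (subst index_minus_mat, (auto)[2])
    apply (subst shift_mult_index[OF X Y], (auto)[2])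
    apply (subst shift_mult_index[OF Y X], (auto)[2])
    by (simp add: algebra_simps)
qed (use X Y in auto)

lemma adj_shift_real: assumes "X \<in> carrier_mat n n" "adj X = X"
  shows "adj (X - complex_of_real r \<cdot>\<^sub>m 1\<^sub>m n) = X - complex_of_real r \<cdot>\<^sub>m 1\<^sub>m n"
proof -
  have "\<And>i j. i < n \<Longrightarrow> j < n \<Longrightarrow> cnj (X $$ (j,i)) = X $$ (i,j)"
    using assms adj_index[of X n n] by metis
  thus ?thesis using assms by (intro eq_matI) (auto simp: adj_def)
qed

lemma adj_shift: assumes "X \<in> carrier_mat n n"
  shows "adj (X - c \<cdot>\<^sub>m 1\<^sub>m n) = adj X - cnj c \<cdot>\<^sub>m 1\<^sub>m n"
  using assms by (intro eq_matI) (auto simp: adj_def)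

lemma shift_mult_vec: fixes X :: "complex mat" assumes X: "X \<in> carrier_mat n n" and w: "w \<in> carrier_vec n"
  shows "(X - c \<cdot>\<^sub>m 1\<^sub>m n) *\<^sub>v w = X *\<^sub>v w - c \<cdot>\<^sub>v w"
proof (rule eq_vecI)
  fix a assume "a < dim_vec (X *\<^sub>v w - c \<cdot>\<^sub>v w)"
  hence a: "a < n" using X w by simp
  have "((X - c \<cdot>\<^sub>m 1\<^sub>m n) *\<^sub>v w) $ a = (\<Sum>j<n. (X$$(a,j) - c * (if a = j then 1 else 0)) * w$j)"
    using X w a by (simp add: scalar_prod_def atLeast0LessThan)
  also have "\<dots> = (\<Sum>j<n. X$$(a,j) * w$j) - (\<Sum>j<n. if a = j then c * w$j else 0)"
    apply (simp only: sum_subtractf[symmetric])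
    by (intro sum.cong refl) (auto simp: algebra_simps)
  also have "\<dots> = (X *\<^sub>v w - c \<cdot>\<^sub>v w) $ a" using X w a by (simp add: scalar_prod_def atLeast0LessThan)
  finally show "((X - c \<cdot>\<^sub>m 1\<^sub>m n) *\<^sub>v w) $ a = (X *\<^sub>v w - c \<cdot>\<^sub>v w) $ a" .
qed (use X w in auto)

lemma Pm_carrier: "Pm m \<in> carrier_mat (2*m) (2*m)" unfolding Pm_def by simp
lemma Qm_carrier: "Qm m \<in> carrier_mat (2*m) (2*m)" unfolding Qm_def by simp

lemma sum_ind: "(\<Sum>ia<(N::nat). (if ia = i \<and> P ia then 1 else 0) * (g ia :: complex)) = (if i < N \<and> P i then g i else 0)"
proof -
  have "(\<Sum>ia<N. (if ia = i \<and> P ia then 1 else 0) * g ia) = (\<Sum>ia<N. if i = ia then (if P i then g i else 0) else 0)"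
    by (intro sum.cong refl) auto
  also have "\<dots> = (if i \<in> {..<N} then (if P i then g i else 0) else 0)" by (simp only: sum.delta'[OF finite_lessThan])
  finally show ?thesis by simp
qed

lemma mult_index: "A \<in> carrier_mat r c \<Longrightarrow> B \<in> carrier_mat c s \<Longrightarrow> i < r \<Longrightarrow> j < s
  \<Longrightarrow> (A * B) $$ (i,j) = (\<Sum>x<c. A $$ (i,x) * B $$ (x,j))"
  by (simp add: scalar_prod_def atLeast0LessThan)

lemma adjP_index: "i < 2*m \<Longrightarrow> j < 2*m \<Longrightarrow> adj (Pm m) $$ (i,j) = (if j = i \<and> j < m then 1 else 0)"
  unfolding adj_def Pm_def by auto
lemma adjQ_index: "i < 2*m \<Longrightarrow> j < 2*m \<Longrightarrow> adj (Qm m) $$ (i,j) = (if j = i \<and> m \<le> j then 1 else 0)"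
  unfolding adj_def Qm_def by auto
lemma P_index: "i < 2*m \<Longrightarrow> j < 2*m \<Longrightarrow> Pm m $$ (i,j) = (if i = j \<and> i < m then 1 else 0)"
  unfolding Pm_def by auto
lemma Q_index: "i < 2*m \<Longrightarrow> j < 2*m \<Longrightarrow> Qm m $$ (i,j) = (if i = j \<and> m \<le> i then 1 else 0)"
  unfolding Qm_def by auto

lemma PP: "adj (Pm m) * Pm m = mat (2*m) (2*m) (\<lambda>(l,l'). if l = l' then (if l < m then 1 else 0) else 0)"
proof (rule eq_matI)
  fix i j assume "i < dim_row (mat (2*m) (2*m) (\<lambda>(l,l'). if l = l' then (if l < m then 1 else 0) else (0::complex)))"
     "j < dim_col (mat (2*m) (2*m) (\<lambda>(l,l'). if l = l' then (if l < m then 1 else 0) else (0::complex)))"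
  hence ij: "i < 2*m" "j < 2*m" by auto
  have "(adj (Pm m) * Pm m) $$ (i,j) = (\<Sum>ia<2*m. (if ia = i \<and> ia < m then 1 else 0) * Pm m $$ (ia,j))"
    using ij by (subst mult_index[OF adj_carrier[OF Pm_carrier] Pm_carrier], auto intro: sum.cong simp: adjP_index)
  also have "\<dots> = (if i < m then Pm m $$ (i,j) else 0)" using ij by (subst sum_ind) auto
  finally show "(adj (Pm m) * Pm m) $$ (i,j) = mat (2*m) (2*m) (\<lambda>(l,l'). if l = l' then (if l < m then 1 else 0) else 0) $$ (i,j)"
    using ij by (auto simp: P_index)
qed (auto simp: Pm_def adj_def)

lemma QQ: "adj (Qm m) * Qm m = mat (2*m) (2*m) (\<lambda>(l,l'). if l = l' then (if m \<le> l then 1 else 0) else 0)"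
proof (rule eq_matI)
  fix i j assume "i < dim_row (mat (2*m) (2*m) (\<lambda>(l,l'). if l = l' then (if m \<le> l then 1 else 0) else (0::complex)))"
     "j < dim_col (mat (2*m) (2*m) (\<lambda>(l,l'). if l = l' then (if m \<le> l then 1 else 0) else (0::complex)))"
  hence ij: "i < 2*m" "j < 2*m" by auto
  have "(adj (Qm m) * Qm m) $$ (i,j) = (\<Sum>ia<2*m. (if ia = i \<and> m \<le> ia then 1 else 0) * Qm m $$ (ia,j))"
    using ij by (subst mult_index[OF adj_carrier[OF Qm_carrier] Qm_carrier], auto intro: sum.cong simp: adjQ_index)
  also have "\<dots> = (if m \<le> i then Qm m $$ (i,j) else 0)" using ij by (subst sum_ind) auto
  finally show "(adj (Qm m) * Qm m) $$ (i,j) = mat (2*m) (2*m) (\<lambda>(l,l'). if l = l' then (if m \<le> l then 1 else 0) else 0) $$ (i,j)"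
    using ij by (auto simp: Q_index)
qed (auto simp: Pm_def Qm_def adj_def)

lemma PQ: "adj (Pm m) * Qm m = 0\<^sub>m (2*m) (2*m)"
proof (rule eq_matI)
  fix i j assume "i < dim_row (0\<^sub>m (2*m) (2*m) :: complex mat)" "j < dim_col (0\<^sub>m (2*m) (2*m) :: complex mat)"
  hence ij: "i < 2*m" "j < 2*m" by auto
  have "(adj (Pm m) * Qm m) $$ (i,j) = (\<Sum>ia<2*m. (if ia = i \<and> ia < m then 1 else 0) * Qm m $$ (ia,j))"
    using ij by (subst mult_index[OF adj_carrier[OF Pm_carrier] Qm_carrier], auto intro: sum.cong simp: adjP_index)
  also have "\<dots> = (if i < m then Qm m $$ (i,j) else 0)" using ij by (subst sum_ind) auto
  finally show "(adj (Pm m) * Qm m) $$ (i,j) = 0\<^sub>m (2*m) (2*m) $$ (i,j)"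
    using ij by (auto simp: Q_index)
qed (auto simp: Pm_def Qm_def adj_def)

lemma unit_vec_vnorm: assumes "0 < N" shows "vnorm (unit_vec N 0 :: complex vec) = 1"
proof -
  have "(\<Sum>i<N. (cmod ((unit_vec N 0 :: complex vec) $ i))\<^sup>2) = (\<Sum>i<N. if i = 0 then 1 else 0)"
    by (intro sum.cong refl) (auto simp: unit_vec_def)
  also have "\<dots> = 1" using assms by simp
  finally show ?thesis unfolding vnorm_def by simp
qed

lemma opnorm_nonneg: assumes "0 < dim_col M" shows "0 \<le> opnorm M"
proof -
  let ?S = "{vnorm (M *\<^sub>v v) | v. v \<in> carrier_vec (dim_col M) \<and> vnorm v = 1}"
  have bdd: "bdd_above ?S"
    by (rule bdd_aboveI[of _ "frob M"]) (use frob_bound in fastforce)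
  have "vnorm (M *\<^sub>v unit_vec (dim_col M) 0) \<in> ?S" using unit_vec_vnorm[OF assms] by auto
  hence "vnorm (M *\<^sub>v unit_vec (dim_col M) 0) \<le> opnorm M" unfolding opnorm_def by (rule cSup_upper[OF _ bdd])
  thus ?thesis using vnorm_nonneg order_trans by blast
qed

lemma vnorm_eq_from_ipv: "ipv a a = ipv b b \<Longrightarrow> vnorm a = vnorm b"
  unfolding ipv_self using vnorm_nonneg
  by (metis of_real_eq_iff power2_eq_imp_eq)

lemma bf_bound:
  assumes C: "C \<in> carrier_mat n n" and U: "U \<in> carrier_mat k k" and UU: "U * adj U = 1\<^sub>m k"
    and v: "v \<in> carrier_vec (n*k)" and v1: "vnorm v = 1" and n: "0 < n" and k: "0 < k"
  shows "cmod (bf n k v C U) \<le> opnorm C"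
proof -
  let ?a = "kron (1\<^sub>m n) (adj U) *\<^sub>v v" and ?b = "kron C (1\<^sub>m k) *\<^sub>v v"
  have aU: "adj U \<in> carrier_mat k k" using adj_carrier[OF U] .
  have "ipv ?a ?b = bf n k v (adj (1\<^sub>m n) * C) (adj (adj U) * 1\<^sub>m k)"
    by (rule ip_kron) (use C U v aU in auto)
  hence eq: "bf n k v C U = ipv ?a ?b" using C U by (simp add: adj_one adj_adj)
  have dims: "dim_vec ?a = dim_vec ?b" using C U by (simp add: kron_def)
  have "ipv ?a ?a = bf n k v (adj (1\<^sub>m n) * 1\<^sub>m n) (adj (adj U) * adj U)"
    by (rule ip_kron) (use C U v aU in auto)
  also have "\<dots> = bf n k v (1\<^sub>m n) (1\<^sub>m k)" using UU U by (simp add: adj_one adj_adj)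
  also have "\<dots> = ipv v v" using ipv_kron1[of "1\<^sub>m n" n "1\<^sub>m k" k v] v k by (simp add: kron_one)
  finally have na: "vnorm ?a = 1" using vnorm_eq_from_ipv v1 by metis
  have "complex_of_real ((vnorm ?b)\<^sup>2) = ipv ?b ?b" by (simp add: ipv_self)
  also have "\<dots> = bf n k v (adj C * C) (adj (1\<^sub>m k) * 1\<^sub>m k)"
    by (rule ip_kron) (use C U v in auto)
  also have "adj (1\<^sub>m k) * 1\<^sub>m k = mat k k (\<lambda>(l,l'). if l = l' then (\<lambda>_. 1) l else 0)"
    unfolding adj_one by (simp add: one_mat_def[symmetric])
  also have "bf n k v (adj C * C) \<dots> = (\<Sum>l<k. 1 * ipv (C *\<^sub>v blk n k v l) (C *\<^sub>v blk n k v l))"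
    by (rule bf_diag) (use C v in auto)
  also have "\<dots> = complex_of_real (\<Sum>l<k. (vnorm (C *\<^sub>v blk n k v l))\<^sup>2)"
    by (simp add: ipv_self)
  finally have nb: "(vnorm ?b)\<^sup>2 = (\<Sum>l<k. (vnorm (C *\<^sub>v blk n k v l))\<^sup>2)" using of_real_eq_iff by blast
  have "complex_of_real ((vnorm v)\<^sup>2) = complex_of_real (\<Sum>l<k. (vnorm (blk n k v l))\<^sup>2)"
    using ipv_self_blk[OF v k] by (simp only: ipv_self of_real_sum)
  hence "(vnorm v)\<^sup>2 = (\<Sum>l<k. (vnorm (blk n k v l))\<^sup>2)" by (simp only: of_real_eq_iff)
  hence vsum: "(\<Sum>l<k. (vnorm (blk n k v l))\<^sup>2) = 1" using v1 by simp
  have opc: "0 \<le> opnorm C" using opnorm_nonneg C n by auto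
  have "(vnorm ?b)\<^sup>2 \<le> (\<Sum>l<k. (opnorm C * vnorm (blk n k v l))\<^sup>2)"
    unfolding nb
  proof (rule sum_mono)
    fix l show "(vnorm (C *\<^sub>v blk n k v l))\<^sup>2 \<le> (opnorm C * vnorm (blk n k v l))\<^sup>2"
      using opnorm_bound[of "blk n k v l" C] C vnorm_nonneg by (auto intro!: power_mono)
  qed
  also have "\<dots> = (opnorm C)\<^sup>2" using vsum by (simp add: power_mult_distrib sum_distrib_left[symmetric])
  finally have "vnorm ?b \<le> opnorm C" using opc by (rule power2_le_imp_le)
  hence "cmod (ipv ?a ?b) \<le> opnorm C" using ipv_cs[OF dims] na by simp
  thus ?thesis using eq by simp
qed

lemma ip_expand:
  fixes x :: "nat \<Rightarrow> nat \<Rightarrow> complex" and g :: "nat \<Rightarrow> complex"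
  assumes I: "finite I"
  shows "(\<Sum>p<N. cnj ((\<Sum>i\<in>I. x i p) + g p) * ((\<Sum>i\<in>I. x i p) + g p))
    = (\<Sum>i\<in>I. \<Sum>j\<in>I. \<Sum>p<N. cnj (x i p) * x j p)
      + (\<Sum>i\<in>I. (\<Sum>p<N. cnj (x i p) * g p) + (\<Sum>p<N. cnj (g p) * x i p))
      + (\<Sum>p<N. cnj (g p) * g p)"
proof -
  have "(\<Sum>p<N. cnj ((\<Sum>i\<in>I. x i p) + g p) * ((\<Sum>i\<in>I. x i p) + g p))
     = (\<Sum>p<N. (\<Sum>i\<in>I. \<Sum>j\<in>I. cnj (x i p) * x j p)
          + (\<Sum>i\<in>I. cnj (x i p) * g p + cnj (g p) * x i p) + cnj (g p) * g p)"
    by (intro sum.cong refl) (simp add: cnj_sum sum_distrib_left sum_distrib_right algebra_simps sum.distrib)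
  also have "\<dots> = (\<Sum>p<N. \<Sum>i\<in>I. \<Sum>j\<in>I. cnj (x i p) * x j p)
      + (\<Sum>p<N. \<Sum>i\<in>I. cnj (x i p) * g p + cnj (g p) * x i p) + (\<Sum>p<N. cnj (g p) * g p)"
    by (simp add: sum.distrib)
  also have "(\<Sum>p<N. \<Sum>i\<in>I. \<Sum>j\<in>I. cnj (x i p) * x j p) = (\<Sum>i\<in>I. \<Sum>j\<in>I. \<Sum>p<N. cnj (x i p) * x j p)"
    unfolding sum.cartesian_product
    by (rule sum.reindex_bij_witness[where i="\<lambda>(i,j,p). (p,i,j)" and j="\<lambda>(p,i,j). (i,j,p)"]) auto
  also have "(\<Sum>p<N. \<Sum>i\<in>I. cnj (x i p) * g p + cnj (g p) * x i p)
      = (\<Sum>i\<in>I. (\<Sum>p<N. cnj (x i p) * g p) + (\<Sum>p<N. cnj (g p) * x i p))"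
    by (subst sum.swap) (simp add: sum.distrib)
  finally show ?thesis .
qed

lemma msum_mult_vec: assumes f: "\<And>i. i \<in> I \<Longrightarrow> f i \<in> carrier_mat N N" and v: "v \<in> carrier_vec N" and p: "p < N"
  shows "(msum N f I *\<^sub>v v) $ p = (\<Sum>i\<in>I. (f i *\<^sub>v v) $ p)"
proof -
  have "(msum N f I *\<^sub>v v) $ p = (\<Sum>q<N. (\<Sum>i\<in>I. f i $$ (p,q)) * v $ q)"
    using v p by (simp add: msum_def scalar_prod_def atLeast0LessThan)
  also have "\<dots> = (\<Sum>i\<in>I. \<Sum>q<N. f i $$ (p,q) * v $ q)"
    by (simp add: sum_distrib_right) (rule sum.swap)
  also have "\<dots> = (\<Sum>i\<in>I. (f i *\<^sub>v v) $ p)"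
  proof (intro sum.cong refl)
    fix i assume "i \<in> I"
    hence "f i \<in> carrier_mat N N" using f by auto
    thus "(\<Sum>q<N. f i $$ (p,q) * v $ q) = (f i *\<^sub>v v) $ p"
      using v p by (simp add: scalar_prod_def atLeast0LessThan)
  qed
  finally show ?thesis .
qed

lemma msum_carrier: "msum N f I \<in> carrier_mat N N" unfolding msum_def by simp

lemma ipv_sum2: assumes "dim_vec w = N" "\<And>p. p < N \<Longrightarrow> w $ p = (\<Sum>i\<in>I. u i $ p)"
  "\<And>i. i \<in> I \<Longrightarrow> dim_vec (u i) = N"
  shows "ipv v w = (\<Sum>i\<in>I. ipv v (u i))"
  unfolding ipv_def using assms
  by (simp add: sum_distrib_left) (rule sum.swap)

lemma offdiag_swap: fixes f :: "nat \<Rightarrow> nat \<Rightarrow> 'a::ab_group_add"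
  shows "(\<Sum>i<d. \<Sum>j\<in>{..<d} - {i}. f i j) = (\<Sum>i<d. \<Sum>j\<in>{..<d} - {i}. f j i)"
proof -
  have e: "\<And>g i. (\<Sum>j\<in>{..<d} - {i}. g j) = (\<Sum>j<d. if j = i then 0 else (g j :: 'a))"
    by (simp add: sum.If_cases Diff_eq Int_commute)
  show ?thesis unfolding e
    apply (subst sum.swap)
    by (intro sum.cong refl) auto
qed

lemma ipv_add2: "dim_vec a = dim_vec b \<Longrightarrow> ipv u (a + b) = ipv u a + ipv u b"
  unfolding ipv_def by (simp add: sum.distrib algebra_simps)
lemma ipv_minus2: "dim_vec a = dim_vec b \<Longrightarrow> ipv u (a - b) = ipv u a - ipv u b"
  unfolding ipv_def by (simp add: sum_subtractf algebra_simps)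

locale LS =
  fixes n m d :: nat and \<Gamma> A :: "nat \<Rightarrow> complex mat" and B :: "complex mat"
    and lam :: "nat \<Rightarrow> real" and \<nu> :: complex and v :: "complex vec"
  assumes n: "0 < n" and m: "0 < m" and cl: "clifford_rep m d \<Gamma>"
    and AH: "\<forall>i<d. A i \<in> carrier_mat n n \<and> hermitian (A i)" and Bc: "B \<in> carrier_mat n n"
    and v: "v \<in> carrier_vec (n*(2*m))" and v1: "vnorm v = 1"
begin

lemma Gc: "i < d \<Longrightarrow> \<Gamma> i \<in> carrier_mat (2*m) (2*m)"
  using cl unfolding clifford_rep_def by auto
lemma Gadj: "i < d \<Longrightarrow> adj (\<Gamma> i) = \<Gamma> i"
  using cl unfolding clifford_rep_def hermitian_def by auto
lemma Gsq: "i < d \<Longrightarrow> \<Gamma> i * \<Gamma> i = 1\<^sub>m (2*m)"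
  using cl unfolding clifford_rep_def by auto
lemma Ganti: "i < d \<Longrightarrow> j < d \<Longrightarrow> i \<noteq> j \<Longrightarrow> \<Gamma> j * \<Gamma> i = - (\<Gamma> i * \<Gamma> j)"
  using cl[unfolded clifford_rep_def] by blast

lemma Ac: "i < d \<Longrightarrow> A i \<in> carrier_mat n n" using AH by auto
lemma Ashc: "i < d \<Longrightarrow> shiftA n A lam i \<in> carrier_mat n n"
  using Ac unfolding shiftA_def by auto
lemma Ashadj: "i < d \<Longrightarrow> adj (shiftA n A lam i) = shiftA n A lam i"
  unfolding shiftA_def using AH by (intro adj_shift_real) (auto simp: hermitian_def)
lemma Bshc: "shiftB n B \<nu> \<in> carrier_mat n n"
  using Bc unfolding shiftB_def by auto
lemma aBshc: "adj (shiftB n B \<nu>) \<in> carrier_mat n n"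
  using adj_carrier[OF Bshc] .

lemma vc: "v \<in> carrier_vec (n*(2*m))" using v .
lemma Nc: "2*m*n = n*(2*m)" by simp

definition "xK i = kron (shiftA n A lam i) (\<Gamma> i) *\<^sub>v v"
definition "yP = kron (shiftB n B \<nu>) (Pm m) *\<^sub>v v"
definition "zQ = kron (adj (shiftB n B \<nu>)) (Qm m) *\<^sub>v v"

lemma xK_dim: "i < d \<Longrightarrow> dim_vec (xK i) = n*(2*m)" unfolding xK_def using kron_carrier[OF Ashc[of i] Gc[of i]] by simp
lemma yP_dim: "dim_vec yP = n*(2*m)" unfolding yP_def using kron_carrier[OF Bshc Pm_carrier[of m]] by simp
lemma zQ_dim: "dim_vec zQ = n*(2*m)" unfolding zQ_def using kron_carrier[OF aBshc Qm_carrier[of m]] by simp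

lemma Lv_entry: assumes p: "p < n*(2*m)"
  shows "(localizer n d m \<Gamma> A B lam \<nu> *\<^sub>v v) $ p = (\<Sum>i<d. xK i $ p) + (yP $ p - zQ $ p)"
proof -
  let ?K = "\<lambda>i. kron (shiftA n A lam i) (\<Gamma> i)"
  have K: "\<And>i. i \<in> {..<d} \<Longrightarrow> ?K i \<in> carrier_mat (n*(2*m)) (n*(2*m))"
    using kron_carrier Ashc Gc by auto
  have M1: "msum (2*m*n) ?K {..<d} \<in> carrier_mat (n*(2*m)) (n*(2*m))"
    unfolding Nc by (rule msum_carrier)
  have M2: "kron (shiftB n B \<nu>) (Pm m) \<in> carrier_mat (n*(2*m)) (n*(2*m))"
    by (rule kron_carrier[OF Bshc Pm_carrier])
  have M3: "kron (adj (shiftB n B \<nu>)) (Qm m) \<in> carrier_mat (n*(2*m)) (n*(2*m))"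
    by (rule kron_carrier[OF aBshc Qm_carrier])
  have "localizer n d m \<Gamma> A B lam \<nu> *\<^sub>v v
     = msum (2*m*n) ?K {..<d} *\<^sub>v v + yP - zQ"
    unfolding localizer_def yP_def zQ_def
    using minus_mult_distrib_mat_vec[OF add_carrier_mat[OF M2] M3 v] add_mult_distrib_mat_vec[OF M1 M2 v] by simp
  also have "(\<dots>) $ p = (msum (2*m*n) ?K {..<d} *\<^sub>v v) $ p + yP $ p - zQ $ p"
    using p M1 yP_dim zQ_dim by simp
  also have "(msum (2*m*n) ?K {..<d} *\<^sub>v v) $ p = (\<Sum>i<d. xK i $ p)"
    unfolding xK_def Nc by (rule msum_mult_vec[of "{..<d}" ?K "n*(2*m)" v p, OF K v p]) simp
  finally show ?thesis by (simp only: add_diff_eq)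
qed

end

lemma sum_ip1: assumes "dim_vec a = N" "dim_vec b = N" "dim_vec c = N"
  shows "(\<Sum>p<N. cnj (a$p) * (b$p - c$p)) = ipv a b - ipv a c"
  unfolding ipv_def using assms by (simp add: sum_subtractf[symmetric] algebra_simps)
lemma sum_ip2: assumes "dim_vec a = N" "dim_vec b = N" "dim_vec c = N"
  shows "(\<Sum>p<N. cnj (b$p - c$p) * a$p) = ipv b a - ipv c a"
  unfolding ipv_def using assms by (simp add: sum_subtractf[symmetric] algebra_simps)
lemma sum_ip3: assumes "dim_vec b = N" "dim_vec c = N"
  shows "(\<Sum>p<N. cnj (b$p - c$p) * (b$p - c$p)) = ipv b b - ipv b c - ipv c b + ipv c c"
  unfolding ipv_def using assms by (simp add: sum_subtractf[symmetric] sum.distrib[symmetric] algebra_simps)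

context LS begin

abbreviation "L \<equiv> localizer n d m \<Gamma> A B lam \<nu>"

lemma L_dim: "dim_vec (L *\<^sub>v v) = n*(2*m)"
  unfolding localizer_def using kron_carrier[OF aBshc Qm_carrier[of m]] by simp

lemma ipLv_expand:
  "ipv (L *\<^sub>v v) (L *\<^sub>v v) = (\<Sum>i<d. \<Sum>j<d. ipv (xK i) (xK j))
     + (\<Sum>i<d. (ipv (xK i) yP - ipv (xK i) zQ) + cnj (ipv (xK i) yP - ipv (xK i) zQ))
     + (ipv yP yP - ipv yP zQ - ipv zQ yP + ipv zQ zQ)"
proof -
  let ?N = "n*(2*m)"
  have "ipv (L *\<^sub>v v) (L *\<^sub>v v) = (\<Sum>p<?N. cnj ((\<Sum>i<d. xK i $ p) + (yP $ p - zQ $ p)) * ((\<Sum>i<d. xK i $ p) + (yP $ p - zQ $ p)))"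
    unfolding ipv_def L_dim by (intro sum.cong refl) (simp add: Lv_entry)
  also have "\<dots> = (\<Sum>i<d. \<Sum>j<d. \<Sum>p<?N. cnj (xK i $ p) * xK j $ p)
      + (\<Sum>i<d. (\<Sum>p<?N. cnj (xK i $ p) * (yP $ p - zQ $ p)) + (\<Sum>p<?N. cnj (yP $ p - zQ $ p) * xK i $ p))
      + (\<Sum>p<?N. cnj (yP $ p - zQ $ p) * (yP $ p - zQ $ p))"
    by (rule ip_expand) simp
  also have "(\<Sum>i<d. \<Sum>j<d. \<Sum>p<?N. cnj (xK i $ p) * xK j $ p) = (\<Sum>i<d. \<Sum>j<d. ipv (xK i) (xK j))"
    unfolding ipv_def by (intro sum.cong refl) (simp add: xK_dim)
  also have "(\<Sum>i<d. (\<Sum>p<?N. cnj (xK i $ p) * (yP $ p - zQ $ p)) + (\<Sum>p<?N. cnj (yP $ p - zQ $ p) * xK i $ p))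
     = (\<Sum>i<d. (ipv (xK i) yP - ipv (xK i) zQ) + cnj (ipv (xK i) yP - ipv (xK i) zQ))"
  proof (intro sum.cong refl)
    fix i assume "i \<in> {..<d}"
    hence xd: "dim_vec (xK i) = ?N" using xK_dim by simp
    show "(\<Sum>p<?N. cnj (xK i $ p) * (yP $ p - zQ $ p)) + (\<Sum>p<?N. cnj (yP $ p - zQ $ p) * xK i $ p)
       = (ipv (xK i) yP - ipv (xK i) zQ) + cnj (ipv (xK i) yP - ipv (xK i) zQ)"
      using sum_ip1[OF xd yP_dim zQ_dim] sum_ip2[OF xd yP_dim zQ_dim]
        ipv_cnj[of "xK i" yP] ipv_cnj[of "xK i" zQ] xd yP_dim zQ_dim by simp
  qed
  also have "(\<Sum>p<?N. cnj (yP $ p - zQ $ p) * (yP $ p - zQ $ p)) = ipv yP yP - ipv yP zQ - ipv zQ yP + ipv zQ zQ"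
    by (rule sum_ip3[OF yP_dim zQ_dim])
  finally show ?thesis .
qed

lemma yz0: "ipv yP zQ = 0"
proof -
  have "ipv yP zQ = bf n (2*m) v (adj (shiftB n B \<nu>) * adj (shiftB n B \<nu>)) (adj (Pm m) * Qm m)"
    unfolding yP_def zQ_def by (rule ip_kron[OF Bshc aBshc Pm_carrier Qm_carrier v])
  thus ?thesis by (simp add: PQ bf_zero2)
qed

lemma zy0: "ipv zQ yP = 0"
  using ipv_cnj[of yP zQ] yz0 yP_dim zQ_dim by simp

lemma one_diag: "1\<^sub>m k = mat k k (\<lambda>(l,l'). if l = l' then (\<lambda>_. 1) l else 0)"
  unfolding one_mat_def by simp

lemma xx: assumes i: "i < d"
  shows "ipv (xK i) (xK i) = complex_of_real (\<Sum>l<2*m. (vnorm (shiftA n A lam i *\<^sub>v blk n (2*m) v l))\<^sup>2)"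
proof -
  have "ipv (xK i) (xK i) = bf n (2*m) v (adj (shiftA n A lam i) * shiftA n A lam i) (adj (\<Gamma> i) * \<Gamma> i)"
    unfolding xK_def by (rule ip_kron[OF Ashc[OF i] Ashc[OF i] Gc[OF i] Gc[OF i] v])
  also have "adj (\<Gamma> i) * \<Gamma> i = 1\<^sub>m (2*m)" using Gadj[OF i] Gsq[OF i] by simp
  also have "\<dots> = mat (2*m) (2*m) (\<lambda>(l,l'). if l = l' then (\<lambda>_. 1) l else 0)" by (rule one_diag)
  also have "bf n (2*m) v (adj (shiftA n A lam i) * shiftA n A lam i) \<dots>
      = (\<Sum>l<2*m. 1 * ipv (shiftA n A lam i *\<^sub>v blk n (2*m) v l) (shiftA n A lam i *\<^sub>v blk n (2*m) v l))"
    by (rule bf_diag[OF Ashc[OF i] Ashc[OF i] v])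
  finally show ?thesis by (simp add: ipv_self)
qed

lemma xy: assumes i: "i < d" and j: "j < d"
  shows "ipv (xK i) (xK j) = bf n (2*m) v (shiftA n A lam i * shiftA n A lam j) (\<Gamma> i * \<Gamma> j)"
proof -
  have "ipv (xK i) (xK j) = bf n (2*m) v (adj (shiftA n A lam i) * shiftA n A lam j) (adj (\<Gamma> i) * \<Gamma> j)"
    unfolding xK_def by (rule ip_kron[OF Ashc[OF i] Ashc[OF j] Gc[OF i] Gc[OF j] v])
  thus ?thesis using Ashadj[OF i] Gadj[OF i] by simp
qed

definition "GG i = kron (shiftA n A lam i * shiftB n B \<nu>) (\<Gamma> i * Pm m)"
definition "HH i = kron (shiftA n A lam i * adj (shiftB n B \<nu>)) (\<Gamma> i * Qm m)"

lemma GG_carrier: "i < d \<Longrightarrow> GG i \<in> carrier_mat (n*(2*m)) (n*(2*m))"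
  unfolding GG_def by (intro kron_carrier mult_carrier_mat[OF Ashc Bshc] mult_carrier_mat[OF Gc Pm_carrier])
lemma HH_carrier: "i < d \<Longrightarrow> HH i \<in> carrier_mat (n*(2*m)) (n*(2*m))"
  unfolding HH_def by (intro kron_carrier mult_carrier_mat[OF Ashc aBshc] mult_carrier_mat[OF Gc Qm_carrier])

lemma xyP: assumes i: "i < d" shows "ipv (xK i) yP = ipv v (GG i *\<^sub>v v)"
proof -
  have "ipv (xK i) yP = bf n (2*m) v (adj (shiftA n A lam i) * shiftB n B \<nu>) (adj (\<Gamma> i) * Pm m)"
    unfolding xK_def yP_def by (rule ip_kron[OF Ashc[OF i] Bshc Gc[OF i] Pm_carrier v])
  also have "\<dots> = bf n (2*m) v (shiftA n A lam i * shiftB n B \<nu>) (\<Gamma> i * Pm m)"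
    using Ashadj[OF i] Gadj[OF i] by simp
  also have "\<dots> = ipv v (GG i *\<^sub>v v)" unfolding GG_def
    by (rule ipv_kron1[symmetric]) (use Ashc[OF i] Bshc Gc[OF i] Pm_carrier v m in auto)
  finally show ?thesis .
qed

lemma xzQ: assumes i: "i < d" shows "ipv (xK i) zQ = ipv v (HH i *\<^sub>v v)"
proof -
  have "ipv (xK i) zQ = bf n (2*m) v (adj (shiftA n A lam i) * adj (shiftB n B \<nu>)) (adj (\<Gamma> i) * Qm m)"
    unfolding xK_def zQ_def by (rule ip_kron[OF Ashc[OF i] aBshc Gc[OF i] Qm_carrier v])
  also have "\<dots> = bf n (2*m) v (shiftA n A lam i * adj (shiftB n B \<nu>)) (\<Gamma> i * Qm m)"
    using Ashadj[OF i] Gadj[OF i] by simp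
  also have "\<dots> = ipv v (HH i *\<^sub>v v)" unfolding HH_def
    by (rule ipv_kron1[symmetric]) (use Ashc[OF i] aBshc Gc[OF i] Qm_carrier v m in auto)
  finally show ?thesis .
qed

lemma yy: "ipv yP yP = complex_of_real (\<Sum>l<2*m. (if l < m then 1 else 0) * (vnorm (shiftB n B \<nu> *\<^sub>v blk n (2*m) v l))\<^sup>2)"
proof -
  have "ipv yP yP = bf n (2*m) v (adj (shiftB n B \<nu>) * shiftB n B \<nu>) (adj (Pm m) * Pm m)"
    unfolding yP_def by (rule ip_kron[OF Bshc Bshc Pm_carrier Pm_carrier v])
  also have "\<dots> = (\<Sum>l<2*m. (if l < m then 1 else 0) * ipv (shiftB n B \<nu> *\<^sub>v blk n (2*m) v l) (shiftB n B \<nu> *\<^sub>v blk n (2*m) v l))"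
    unfolding PP by (rule bf_diag[OF Bshc Bshc v])
  also have "\<dots> = complex_of_real (\<Sum>l<2*m. (if l < m then 1 else 0) * (vnorm (shiftB n B \<nu> *\<^sub>v blk n (2*m) v l))\<^sup>2)"
    unfolding of_real_sum by (intro sum.cong refl) (auto simp: ipv_self)
  finally show ?thesis .
qed

lemma zz: "ipv zQ zQ = complex_of_real (\<Sum>l<2*m. (if m \<le> l then 1 else 0) * (vnorm (adj (shiftB n B \<nu>) *\<^sub>v blk n (2*m) v l))\<^sup>2)"
proof -
  have "ipv zQ zQ = bf n (2*m) v (adj (adj (shiftB n B \<nu>)) * adj (shiftB n B \<nu>)) (adj (Qm m) * Qm m)"
    unfolding zQ_def by (rule ip_kron[OF aBshc aBshc Qm_carrier Qm_carrier v])
  also have "\<dots> = (\<Sum>l<2*m. (if m \<le> l then 1 else 0) * ipv (adj (shiftB n B \<nu>) *\<^sub>v blk n (2*m) v l) (adj (shiftB n B \<nu>) *\<^sub>v blk n (2*m) v l))"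
    unfolding QQ by (rule bf_diag[OF aBshc aBshc v])
  also have "\<dots> = complex_of_real (\<Sum>l<2*m. (if m \<le> l then 1 else 0) * (vnorm (adj (shiftB n B \<nu>) *\<^sub>v blk n (2*m) v l))\<^sup>2)"
    unfolding of_real_sum by (intro sum.cong refl) (auto simp: ipv_self)
  finally show ?thesis .
qed

end

context LS begin

abbreviation "FF \<equiv> Fmat n d m \<Gamma> A B lam \<nu>"

lemma Fv: "ipv v (FF *\<^sub>v v) = (\<Sum>i<d. ipv v (GG i *\<^sub>v v) + cnj (ipv v (GG i *\<^sub>v v)))
   - (\<Sum>i<d. ipv v (HH i *\<^sub>v v) + cnj (ipv v (HH i *\<^sub>v v)))"
proof -
  let ?N = "n*(2*m)"
  have F: "FF = msum ?N (\<lambda>i. GG i + adj (GG i)) {..<d} - msum ?N (\<lambda>i. HH i + adj (HH i)) {..<d}"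
    unfolding Fmat_def Let_def GG_def[symmetric] HH_def[symmetric] Nc ..
  have M1: "msum ?N (\<lambda>i. GG i + adj (GG i)) {..<d} \<in> carrier_mat ?N ?N" by (rule msum_carrier)
  have M2: "msum ?N (\<lambda>i. HH i + adj (HH i)) {..<d} \<in> carrier_mat ?N ?N" by (rule msum_carrier)
  have one: "\<And>M :: nat \<Rightarrow> complex mat. (\<And>i. i \<in> {..<d} \<Longrightarrow> M i \<in> carrier_mat ?N ?N) \<Longrightarrow>
     ipv v (msum ?N (\<lambda>i. M i + adj (M i)) {..<d} *\<^sub>v v) = (\<Sum>i<d. ipv v (M i *\<^sub>v v) + cnj (ipv v (M i *\<^sub>v v)))"
  proof -
    fix M :: "nat \<Rightarrow> complex mat" assume Mc: "\<And>i. i \<in> {..<d} \<Longrightarrow> M i \<in> carrier_mat ?N ?N"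
    have Mc2: "\<And>i. i \<in> {..<d} \<Longrightarrow> M i + adj (M i) \<in> carrier_mat ?N ?N"
      by (rule add_carrier_mat[OF adj_carrier[OF Mc]])
    have "ipv v (msum ?N (\<lambda>i. M i + adj (M i)) {..<d} *\<^sub>v v) = (\<Sum>i<d. ipv v ((M i + adj (M i)) *\<^sub>v v))"
    proof (rule ipv_sum2[of _ ?N])
      show "dim_vec (msum ?N (\<lambda>i. M i + adj (M i)) {..<d} *\<^sub>v v) = ?N" by (simp add: msum_def)
      show "\<And>p. p < ?N \<Longrightarrow> (msum ?N (\<lambda>i. M i + adj (M i)) {..<d} *\<^sub>v v) $ p = (\<Sum>i<d. ((M i + adj (M i)) *\<^sub>v v) $ p)"
        by (rule msum_mult_vec[OF Mc2 v])
      show "\<And>i. i \<in> {..<d} \<Longrightarrow> dim_vec ((M i + adj (M i)) *\<^sub>v v) = ?N"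
        using Mc2 by (metis carrier_matD(1) dim_mult_mat_vec)
    qed
    also have "\<dots> = (\<Sum>i<d. ipv v (M i *\<^sub>v v) + cnj (ipv v (M i *\<^sub>v v)))"
    proof (intro sum.cong refl)
      fix i assume i: "i \<in> {..<d}"
      have c: "M i \<in> carrier_mat ?N ?N" "adj (M i) \<in> carrier_mat ?N ?N" using Mc[OF i] adj_carrier[OF Mc[OF i]] by auto
      have "ipv v ((M i + adj (M i)) *\<^sub>v v) = ipv v (M i *\<^sub>v v) + ipv v (adj (M i) *\<^sub>v v)"
        unfolding add_mult_distrib_mat_vec[OF c v] using c by (intro ipv_add2) simp
      also have "ipv v (adj (M i) *\<^sub>v v) = ipv (M i *\<^sub>v v) v" by (rule ipv_adj[OF c(1) v v])
      also have "\<dots> = cnj (ipv v (M i *\<^sub>v v))" using ipv_cnj[of v "M i *\<^sub>v v"] c v by simp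
      finally show "ipv v ((M i + adj (M i)) *\<^sub>v v) = ipv v (M i *\<^sub>v v) + cnj (ipv v (M i *\<^sub>v v))" .
    qed
    finally show "ipv v (msum ?N (\<lambda>i. M i + adj (M i)) {..<d} *\<^sub>v v) = (\<Sum>i<d. ipv v (M i *\<^sub>v v) + cnj (ipv v (M i *\<^sub>v v)))" .
  qed
  have "ipv v (FF *\<^sub>v v) = ipv v (msum ?N (\<lambda>i. GG i + adj (GG i)) {..<d} *\<^sub>v v)
      - ipv v (msum ?N (\<lambda>i. HH i + adj (HH i)) {..<d} *\<^sub>v v)"
    unfolding F minus_mult_distrib_mat_vec[OF M1 M2 v] using M1 M2 by (intro ipv_minus2) simp
  also have "\<dots> = (\<Sum>i<d. ipv v (GG i *\<^sub>v v) + cnj (ipv v (GG i *\<^sub>v v)))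
     - (\<Sum>i<d. ipv v (HH i *\<^sub>v v) + cnj (ipv v (HH i *\<^sub>v v)))"
    using one[of GG, OF GG_carrier] one[of HH, OF HH_carrier] by simp
  finally show ?thesis .
qed


lemma UU: assumes i: "i < d" and j: "j < d"
  shows "(\<Gamma> i * \<Gamma> j) * adj (\<Gamma> i * \<Gamma> j) = 1\<^sub>m (2*m)"
proof -
  have ci: "\<Gamma> i \<in> carrier_mat (2*m) (2*m)" and cj: "\<Gamma> j \<in> carrier_mat (2*m) (2*m)" using Gc i j by auto
  have "adj (\<Gamma> i * \<Gamma> j) = \<Gamma> j * \<Gamma> i"
    using adj_mult[OF ci cj] Gadj[OF i] Gadj[OF j] by simp
  hence "(\<Gamma> i * \<Gamma> j) * adj (\<Gamma> i * \<Gamma> j) = \<Gamma> i * ((\<Gamma> j * \<Gamma> j) * \<Gamma> i)"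
    using ci cj by (simp add: assoc_mult_mat[of _ "2*m" "2*m" _ "2*m" _ "2*m"])
  also have "\<dots> = 1\<^sub>m (2*m)" using Gsq[OF j] Gsq[OF i] ci by simp
  finally show ?thesis .
qed

lemma comm_shift: assumes i: "i < d" and j: "j < d"
  shows "shiftA n A lam i * shiftA n A lam j - shiftA n A lam j * shiftA n A lam i = A i * A j - A j * A i"
  unfolding shiftA_def by (rule shift_comm[OF Ac[OF i] Ac[OF j]])

abbreviation "SS \<equiv> (\<Sum>i<d. \<Sum>j\<in>{..<d} - {i}. ipv (xK i) (xK j))"
abbreviation "Cs \<equiv> (\<Sum>i<d. \<Sum>k\<in>{..<d} - {i}. opnorm (A i * A k - A k * A i))"

lemma SS_bound: "cmod SS \<le> Cs"
proof -
  let ?f = "\<lambda>i j. bf n (2*m) v (shiftA n A lam i * shiftA n A lam j) (\<Gamma> i * \<Gamma> j)"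
  let ?U = "\<lambda>i j. \<Gamma> i * \<Gamma> j"
  have S1: "SS = (\<Sum>i<d. \<Sum>j\<in>{..<d} - {i}. ?f i j)"
    by (intro sum.cong refl) (auto simp: xy)
  also have "\<dots> = (\<Sum>i<d. \<Sum>j\<in>{..<d} - {i}. ?f j i)" by (rule offdiag_swap)
  also have "\<dots> = (\<Sum>i<d. \<Sum>j\<in>{..<d} - {i}. - bf n (2*m) v (shiftA n A lam j * shiftA n A lam i) (?U i j))"
  proof (intro sum.cong refl)
    fix i j assume i: "i \<in> {..<d}" and j: "j \<in> {..<d} - {i}"
    hence "?U j i = - ?U i j" using Ganti[of j i] by auto
    moreover have "?U i j \<in> carrier_mat (2*m) (2*m)" using mult_carrier_mat[OF Gc[of i] Gc[of j]] i j by auto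
    ultimately show "?f j i = - bf n (2*m) v (shiftA n A lam j * shiftA n A lam i) (?U i j)"
      by (simp add: bf_uminus2)
  qed
  finally have S2: "SS = \<dots>" .
  have "SS + SS = (\<Sum>i<d. \<Sum>j\<in>{..<d} - {i}. bf n (2*m) v (A i * A j - A j * A i) (?U i j))"
  proof -
    have "SS + SS = (\<Sum>i<d. \<Sum>j\<in>{..<d} - {i}. ?f i j - bf n (2*m) v (shiftA n A lam j * shiftA n A lam i) (?U i j))"
      apply (subst (1) S1) apply (subst S2)
      by (simp add: sum.distrib[symmetric])
    also have "\<dots> = (\<Sum>i<d. \<Sum>j\<in>{..<d} - {i}. bf n (2*m) v (A i * A j - A j * A i) (?U i j))"
    proof (intro sum.cong refl)
      fix i j assume i: "i \<in> {..<d}" and j: "j \<in> {..<d} - {i}"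
      have ci: "shiftA n A lam i \<in> carrier_mat n n" and cj: "shiftA n A lam j \<in> carrier_mat n n"
        using Ashc i j by auto
      show "?f i j - bf n (2*m) v (shiftA n A lam j * shiftA n A lam i) (?U i j) = bf n (2*m) v (A i * A j - A j * A i) (?U i j)"
        using bf_minus1[OF mult_carrier_mat[OF ci cj] mult_carrier_mat[OF cj ci], of "2*m" v "?U i j"]
          comm_shift[of i j] i j by simp
    qed
    finally show ?thesis .
  qed
  note e2 = this
  have "cmod (SS + SS) \<le> (\<Sum>i<d. \<Sum>j\<in>{..<d} - {i}. cmod (bf n (2*m) v (A i * A j - A j * A i) (?U i j)))"
    unfolding e2 by (rule order_trans[OF norm_sum sum_mono[OF norm_sum]])
  also have "\<dots> \<le> Cs"
  proof (intro sum_mono)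
    fix i j assume i: "i \<in> {..<d}" and j: "j \<in> {..<d} - {i}"
    have C: "A i * A j - A j * A i \<in> carrier_mat n n" using minus_carrier_mat[OF mult_carrier_mat[OF Ac[of j] Ac[of i]]] i j by auto
    have U: "?U i j \<in> carrier_mat (2*m) (2*m)" using mult_carrier_mat[OF Gc[of i] Gc[of j]] i j by auto
    show "cmod (bf n (2*m) v (A i * A j - A j * A i) (?U i j)) \<le> opnorm (A i * A j - A j * A i)"
      by (rule bf_bound[OF C U UU v v1 n]) (use i j m in auto)
  qed
  finally have "cmod (SS + SS) \<le> Cs" .
  moreover have "cmod SS \<le> cmod (SS + SS)"
  proof -
    have "SS + SS = 2 * SS" by simp
    hence "cmod (SS + SS) = 2 * cmod SS" by (simp add: norm_mult)
    thus ?thesis by simp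
  qed
  ultimately show ?thesis by linarith
qed

end

context LS begin

definition "aa i l = (vnorm (shiftA n A lam i *\<^sub>v blk n (2*m) v l))\<^sup>2"
definition "bP l = (vnorm (shiftB n B \<nu> *\<^sub>v blk n (2*m) v l))\<^sup>2"
definition "bQ l = (vnorm (adj (shiftB n B \<nu>) *\<^sub>v blk n (2*m) v l))\<^sup>2"

lemma expand2: "ipv (L *\<^sub>v v) (L *\<^sub>v v) = complex_of_real (\<Sum>i<d. \<Sum>l<2*m. aa i l) + SS + ipv v (FF *\<^sub>v v)
   + complex_of_real (\<Sum>l<2*m. (if l < m then 1 else 0) * bP l)
   + complex_of_real (\<Sum>l<2*m. (if m \<le> l then 1 else 0) * bQ l)"
proof -
  have s1: "(\<Sum>i<d. \<Sum>j<d. ipv (xK i) (xK j)) = (\<Sum>i<d. ipv (xK i) (xK i)) + SS"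
    unfolding sum.distrib[symmetric]
  proof (intro sum.cong refl)
    fix i assume i: "i \<in> {..<d}"
    show "(\<Sum>j<d. ipv (xK i) (xK j)) = ipv (xK i) (xK i) + (\<Sum>j\<in>{..<d} - {i}. ipv (xK i) (xK j))"
      by (rule sum.remove[OF finite_lessThan i])
  qed
  have s2: "(\<Sum>i<d. ipv (xK i) (xK i)) = complex_of_real (\<Sum>i<d. \<Sum>l<2*m. aa i l)"
    unfolding of_real_sum aa_def by (intro sum.cong refl) (simp add: xx)
  have s3: "(\<Sum>i<d. (ipv (xK i) yP - ipv (xK i) zQ) + cnj (ipv (xK i) yP - ipv (xK i) zQ)) = ipv v (FF *\<^sub>v v)"
    unfolding Fv sum_subtractf[symmetric]
    by (intro sum.cong refl) (simp add: xyP xzQ)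
  show ?thesis
    unfolding ipLv_expand s1 s2 s3 yz0 zy0 yy zz bP_def bQ_def by simp
qed

lemma FF_carrier: "FF \<in> carrier_mat (n*(2*m)) (n*(2*m))"
  unfolding Fmat_def Let_def Nc by (rule minus_carrier_mat[OF msum_carrier])

abbreviation "qq l \<equiv> (\<Sum>i<d. aa i l) + (if l < m then bP l else bQ l)"

lemma key: "(\<Sum>l<2*m. qq l) \<le> (vnorm (L *\<^sub>v v))\<^sup>2 + Cs + opnorm FF"
proof -
  have "complex_of_real ((vnorm (L *\<^sub>v v))\<^sup>2) = ipv (L *\<^sub>v v) (L *\<^sub>v v)" by (simp add: ipv_self)
  hence "(vnorm (L *\<^sub>v v))\<^sup>2 = Re (ipv (L *\<^sub>v v) (L *\<^sub>v v))" by (metis Re_complex_of_real)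
  also have "\<dots> = (\<Sum>i<d. \<Sum>l<2*m. aa i l) + Re SS + Re (ipv v (FF *\<^sub>v v))
   + (\<Sum>l<2*m. (if l < m then 1 else 0) * bP l) + (\<Sum>l<2*m. (if m \<le> l then 1 else 0) * bQ l)"
    unfolding expand2 by simp
  finally have E: "(vnorm (L *\<^sub>v v))\<^sup>2 = \<dots>" .
  have r1: "- Cs \<le> Re SS" using SS_bound abs_Re_le_cmod[of SS] by linarith
  have "cmod (ipv v (FF *\<^sub>v v)) \<le> vnorm v * vnorm (FF *\<^sub>v v)"
    by (rule ipv_cs) (use FF_carrier v in simp)
  also have "\<dots> \<le> opnorm FF"
    using opnorm_bound[of v FF] FF_carrier v v1 by simp
  finally have r2: "- opnorm FF \<le> Re (ipv v (FF *\<^sub>v v))" using abs_Re_le_cmod[of "ipv v (FF *\<^sub>v v)"] by linarith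
  have "(\<Sum>l<2*m. qq l) = (\<Sum>i<d. \<Sum>l<2*m. aa i l) + ((\<Sum>l<2*m. (if l < m then 1 else 0) * bP l) + (\<Sum>l<2*m. (if m \<le> l then 1 else 0) * bQ l))"
  proof -
    have "(\<Sum>l<2*m. qq l) = (\<Sum>l<2*m. (\<Sum>i<d. aa i l) + ((if l < m then 1 else 0) * bP l + (if m \<le> l then 1 else 0) * bQ l))"
      by (intro sum.cong refl) auto
    also have "\<dots> = (\<Sum>l<2*m. \<Sum>i<d. aa i l) + (\<Sum>l<2*m. (if l < m then 1 else 0) * bP l + (if m \<le> l then 1 else 0) * bQ l)"
      by (rule sum.distrib)
    also have "(\<Sum>l<2*m. \<Sum>i<d. aa i l) = (\<Sum>i<d. \<Sum>l<2*m. aa i l)" by (rule sum.swap)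
    also have "(\<Sum>l<2*m. (if l < m then 1 else 0) * bP l + (if m \<le> l then 1 else 0) * bQ l)
       = (\<Sum>l<2*m. (if l < m then 1 else 0) * bP l) + (\<Sum>l<2*m. (if m \<le> l then 1 else 0) * bQ l)"
      by (rule sum.distrib)
    finally show ?thesis .
  qed
  thus ?thesis using E r1 r2 by linarith
qed

end

lemma Units_left_inv: assumes "L \<in> Units (ring_mat TYPE(complex) N b)"
  shows "\<exists>M. M \<in> carrier_mat N N \<and> M * L = 1\<^sub>m N"
  using assms unfolding Units_def ring_mat_simps by auto

lemma exists_small:
  fixes L :: "complex mat"
  assumes Lc: "L \<in> carrier_mat N N" and N: "0 < N" and e0: "0 \<le> e" and se: "sigma_min L \<le> e" and e2: "0 \<le> e2"
  shows "\<exists>v. v \<in> carrier_vec N \<and> vnorm v = 1 \<and> (vnorm (L *\<^sub>v v))\<^sup>2 + e2 \<le> 2 * (e\<^sup>2 + e2)"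
proof -
  let ?S = "{vnorm (L *\<^sub>v v) | v. v \<in> carrier_vec (dim_col L) \<and> vnorm v = 1}"
  have dc: "dim_col L = N" using Lc by simp
  have ne: "?S \<noteq> {}"
  proof -
    have "unit_vec N 0 \<in> carrier_vec (dim_col L) \<and> vnorm (unit_vec N 0) = 1" using unit_vec_vnorm[OF N] dc by auto
    thus ?thesis by blast
  qed
  have inf: "Inf ?S \<le> e" using se unfolding sigma_min_def .
  show ?thesis
  proof (cases "e\<^sup>2 + e2 > 0")
    case True
    let ?t = "sqrt (2 * e\<^sup>2 + e2)"
    have "e < ?t"
    proof -
      have "e\<^sup>2 < 2 * e\<^sup>2 + e2" using True by simp
      hence "sqrt (e\<^sup>2) < ?t" by (rule real_sqrt_less_mono)
      thus ?thesis using e0 by simp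
    qed
    hence "Inf ?S < ?t" using inf by linarith
    then obtain x where "x \<in> ?S" "x < ?t" using cInf_lessD[OF ne] by blast
    then obtain v where v: "v \<in> carrier_vec N" "vnorm v = 1" and x: "x = vnorm (L *\<^sub>v v)" using dc by auto
    have "x\<^sup>2 \<le> ?t\<^sup>2" using \<open>x < ?t\<close> x vnorm_nonneg by (intro power_mono) auto
    hence "x\<^sup>2 \<le> 2 * e\<^sup>2 + e2" using e2 by simp
    thus ?thesis using v x by (intro exI[of _ v]) auto
  next
    case False
    have sq: "0 \<le> e\<^sup>2" by simp
    have ee2: "e2 = 0" "e\<^sup>2 = 0" using False e2 sq by linarith+
    have ee: "e = 0" "e2 = 0" using ee2 by simp_all
    have "\<exists>w. w \<in> carrier_vec N \<and> w \<noteq> 0\<^sub>v N \<and> L *\<^sub>v w = 0\<^sub>v N"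
    proof (cases "det L = 0")
      case True
      thus ?thesis using det_0_iff_vec_prod_zero[OF Lc] by auto
    next
      case False
      have U: "L \<in> Units (ring_mat TYPE(complex) N ())" by (rule det_non_zero_imp_unit[OF Lc False])
      have "\<exists>M. M \<in> carrier_mat N N \<and> M * L = 1\<^sub>m N" by (rule Units_left_inv[OF U])
      then obtain M where M: "M \<in> carrier_mat N N" "M * L = 1\<^sub>m N" by blast
      have "frob M > 0 \<and> (\<forall>x\<in>?S. 1 / frob M \<le> x)"
      proof -
        have bound: "\<And>u. u \<in> carrier_vec N \<Longrightarrow> vnorm u = 1 \<Longrightarrow> 1 \<le> frob M * vnorm (L *\<^sub>v u)"
        proof -
          fix u assume u: "u \<in> carrier_vec N" "vnorm u = 1"
          have "M *\<^sub>v (L *\<^sub>v u) = (M * L) *\<^sub>v u" using M Lc u by (intro assoc_mult_mat_vec[symmetric]) auto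
          hence eq: "M *\<^sub>v (L *\<^sub>v u) = u" using M u by simp
          have "vnorm (M *\<^sub>v (L *\<^sub>v u)) \<le> frob M * vnorm (L *\<^sub>v u)"
            by (rule frob_bound) (use M Lc u in auto)
          hence "vnorm u \<le> frob M * vnorm (L *\<^sub>v u)" unfolding eq .
          thus "1 \<le> frob M * vnorm (L *\<^sub>v u)" using u by simp
        qed
        have fp: "frob M > 0"
        proof -
          have "1 \<le> frob M * vnorm (L *\<^sub>v unit_vec N 0)" using bound[of "unit_vec N 0"] unit_vec_vnorm[OF N] by simp
          moreover have "0 \<le> frob M" unfolding frob_def by (simp add: sum_nonneg)
          ultimately show ?thesis by (cases "frob M = 0") auto
        qed
        moreover have "\<forall>x\<in>?S. 1 / frob M \<le> x"
        proof
          fix x assume "x \<in> ?S"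
          then obtain u where u: "u \<in> carrier_vec N" "vnorm u = 1" and x: "x = vnorm (L *\<^sub>v u)" using dc by auto
          show "1 / frob M \<le> x" using bound[OF u] fp x by (simp add: divide_le_eq mult.commute)
        qed
        ultimately show ?thesis by blast
      qed
      hence "1 / frob M \<le> Inf ?S" using ne by (intro cInf_greatest) auto
      moreover have "0 < 1 / frob M" using \<open>frob M > 0 \<and> _\<close> by simp
      ultimately have False using inf ee by linarith
      thus ?thesis ..
    qed
    then obtain w where w: "w \<in> carrier_vec N" "w \<noteq> 0\<^sub>v N" "L *\<^sub>v w = 0\<^sub>v N" by blast
    have "vnorm w \<noteq> 0" using vnorm_zero[of w] w by auto
    hence pos: "vnorm w > 0" using vnorm_nonneg[of w] by linarith
    define u where "u = complex_of_real (1 / vnorm w) \<cdot>\<^sub>v w"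
    have u: "u \<in> carrier_vec N" "vnorm u = 1" unfolding u_def using w pos by (auto simp: vnorm_smult norm_divide)
    have "L *\<^sub>v u = complex_of_real (1 / vnorm w) \<cdot>\<^sub>v (L *\<^sub>v w)" unfolding u_def by (rule mult_mat_vec[OF Lc w(1)])
    hence "vnorm (L *\<^sub>v u) = 0" using w by (simp add: vnorm_smult vnorm_def)
    thus ?thesis using u ee by (intro exI[of _ u]) auto
  qed
qed

lemma scale_shift: fixes X :: "complex mat"
  assumes X: "X \<in> carrier_mat n n" and w: "w \<in> carrier_vec n"
  shows "(vnorm (X *\<^sub>v (complex_of_real s \<cdot>\<^sub>v w) - c \<cdot>\<^sub>v (complex_of_real s \<cdot>\<^sub>v w)))\<^sup>2
       = s\<^sup>2 * (vnorm ((X - c \<cdot>\<^sub>m 1\<^sub>m n) *\<^sub>v w))\<^sup>2"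
proof -
  have sw: "complex_of_real s \<cdot>\<^sub>v w \<in> carrier_vec n" using w by simp
  have "X *\<^sub>v (complex_of_real s \<cdot>\<^sub>v w) - c \<cdot>\<^sub>v (complex_of_real s \<cdot>\<^sub>v w) = (X - c \<cdot>\<^sub>m 1\<^sub>m n) *\<^sub>v (complex_of_real s \<cdot>\<^sub>v w)"
    by (rule shift_mult_vec[OF X sw, symmetric])
  also have "\<dots> = complex_of_real s \<cdot>\<^sub>v ((X - c \<cdot>\<^sub>m 1\<^sub>m n) *\<^sub>v w)"
    by (rule mult_mat_vec) (use X w in auto)
  finally show ?thesis by (simp add: vnorm_smult power_mult_distrib)
qed

theorem mainTheorem2:
  fixes n d m :: nat and \<Gamma> A :: "nat \<Rightarrow> complex mat" and B :: "complex mat"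
    and lam :: "nat \<Rightarrow> real" and \<nu> :: complex and \<epsilon>\<^sub>1 \<epsilon>\<^sub>2 :: real
  assumes "0 < n" "0 < d" "0 < m"
    and "clifford_rep m d \<Gamma>"
    and "\<forall>i<d. A i \<in> carrier_mat n n \<and> hermitian (A i)"
    and "B \<in> carrier_mat n n"
    and "\<forall>i\<ge>d. lam i = 0"
    and "\<epsilon>\<^sub>1 \<ge> 0" and "(lam, \<nu>) \<in> clifford_pseudospectrum n d m \<Gamma> \<epsilon>\<^sub>1 A B"
    and "\<epsilon>\<^sub>2 \<ge> 0"
    and "(\<Sum>i<d. \<Sum>k\<in>{..<d} - {i}. opnorm (A i * A k - A k * A i))
           + opnorm (Fmat n d m \<Gamma> A B lam \<nu>) \<le> \<epsilon>\<^sub>2"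
  shows "\<exists>\<psi> \<in> carrier_vec n. vnorm \<psi> = 1 \<and>
    (sqrt ((\<Sum>i<d. (vnorm (A i *\<^sub>v \<psi> - complex_of_real (lam i) \<cdot>\<^sub>v \<psi>))\<^sup>2)
           + (vnorm (B *\<^sub>v \<psi> - \<nu> \<cdot>\<^sub>v \<psi>))\<^sup>2)
       \<le> sqrt (real (2*m)) * sqrt (\<epsilon>\<^sub>1\<^sup>2 + \<epsilon>\<^sub>2)
     \<or> sqrt ((\<Sum>i<d. (vnorm (A i *\<^sub>v \<psi> - complex_of_real (lam i) \<cdot>\<^sub>v \<psi>))\<^sup>2)
           + (vnorm (adj B *\<^sub>v \<psi> - cnj \<nu> \<cdot>\<^sub>v \<psi>))\<^sup>2)
       \<le> sqrt (real (2*m)) * sqrt (\<epsilon>\<^sub>1\<^sup>2 + \<epsilon>\<^sub>2))"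
proof -
  let ?L = "localizer n d m \<Gamma> A B lam \<nu>"
  let ?N = "n*(2*m)"
  have Bsh: "shiftB n B \<nu> \<in> carrier_mat n n" using assms(6) unfolding shiftB_def by auto
  have Lc: "?L \<in> carrier_mat ?N ?N" unfolding localizer_def
    by (rule minus_carrier_mat[OF kron_carrier[OF adj_carrier[OF Bsh] Qm_carrier]])
  have N: "0 < ?N" using assms(1,3) by simp
  have se: "sigma_min ?L \<le> \<epsilon>\<^sub>1" using assms(9) unfolding clifford_pseudospectrum_def clifford_radial_gap_def by auto
  obtain v where vv: "v \<in> carrier_vec ?N" "vnorm v = 1" "(vnorm (?L *\<^sub>v v))\<^sup>2 + \<epsilon>\<^sub>2 \<le> 2 * (\<epsilon>\<^sub>1\<^sup>2 + \<epsilon>\<^sub>2)"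
    using exists_small[OF Lc N assms(8) se assms(10)] by blast
  interpret LS n m d \<Gamma> A B lam \<nu> v
    by (unfold_locales) (use assms vv in auto)
  let ?C = "(vnorm (?L *\<^sub>v v))\<^sup>2 + \<epsilon>\<^sub>2"
  have K: "(\<Sum>l<2*m. qq l) \<le> ?C" using key assms(11) by linarith
  have c0: "0 \<le> \<epsilon>\<^sub>1\<^sup>2 + \<epsilon>\<^sub>2" using assms(10) by simp
  have "2 * (\<epsilon>\<^sub>1\<^sup>2 + \<epsilon>\<^sub>2) \<le> real (2*m) * (\<epsilon>\<^sub>1\<^sup>2 + \<epsilon>\<^sub>2)"
    using assms(3) c0 by (intro mult_right_mono) auto
  hence C2: "?C \<le> real (2*m) * (\<epsilon>\<^sub>1\<^sup>2 + \<epsilon>\<^sub>2)" using vv(3) by linarith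
  define vb where "vb l = (vnorm (blk n (2*m) v l))\<^sup>2" for l
  have vsum: "(\<Sum>l<2*m. vb l) = 1"
  proof -
    have "complex_of_real ((vnorm v)\<^sup>2) = complex_of_real (\<Sum>l<2*m. vb l)"
      using ipv_self_blk[OF vv(1)] assms(3) unfolding vb_def by (simp only: ipv_self of_real_sum)
    hence "(vnorm v)\<^sup>2 = (\<Sum>l<2*m. vb l)" by (simp only: of_real_eq_iff)
    thus ?thesis using vv(2) by simp
  qed
  have qnn: "\<And>l. 0 \<le> qq l" unfolding aa_def bP_def bQ_def by (simp add: sum_nonneg)
  have vbnn: "\<And>l. 0 \<le> vb l" unfolding vb_def by simp
  obtain l where l: "l < 2*m" "vb l > 0" "qq l \<le> ?C * vb l"
  proof (rule ccontr)
    assume "\<not> thesis"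
    hence H: "\<And>l. l < 2*m \<Longrightarrow> vb l > 0 \<Longrightarrow> ?C * vb l < qq l" using that by fastforce
    have le: "\<forall>l\<in>{..<2*m}. ?C * vb l \<le> qq l"
    proof
      fix l assume "l \<in> {..<2*m}"
      thus "?C * vb l \<le> qq l" using H[of l] vbnn[of l] qnn[of l]
        by (cases "vb l = 0") (auto simp: less_eq_real_def)
    qed
    have "\<exists>l\<in>{..<2*m}. vb l > 0"
    proof (rule ccontr)
      assume "\<not> ?thesis"
      hence "\<forall>l\<in>{..<2*m}. vb l = 0" using vbnn by (meson linorder_not_le order_antisym)
      hence "(\<Sum>l<2*m. vb l) = 0" by simp
      thus False using vsum by simp
    qed
    then obtain l0 where l0: "l0 \<in> {..<2*m}" "vb l0 > 0" by blast
    have lt: "\<exists>l\<in>{..<2*m}. ?C * vb l < qq l"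
      using H[of l0] l0 by (intro bexI[of _ l0]) auto
    have "(\<Sum>l<2*m. ?C * vb l) < (\<Sum>l<2*m. qq l)"
      by (rule sum_strict_mono_ex1[OF finite_lessThan le lt])
    hence "?C < (\<Sum>l<2*m. qq l)" using vsum by (simp add: sum_distrib_left[symmetric])
    thus False using K by linarith
  qed
  define w where "w = blk n (2*m) v l"
  have wc: "w \<in> carrier_vec n" unfolding w_def by simp
  have vbw: "vb l = (vnorm w)\<^sup>2" unfolding vb_def w_def ..
  have wpos: "vnorm w > 0" using l(2) vbw vnorm_nonneg[of w]
    by (metis less_eq_real_def power_zero_numeral zero_power2)
  define s where "s = 1 / vnorm w"
  define \<psi> where "\<psi> = complex_of_real s \<cdot>\<^sub>v w"
  have \<psi>c: "\<psi> \<in> carrier_vec n" unfolding \<psi>_def using wc by simp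
  have \<psi>1: "vnorm \<psi> = 1" unfolding \<psi>_def s_def using wpos by (simp add: vnorm_smult norm_divide)
  have s2: "s\<^sup>2 * vb l = 1" unfolding s_def vbw using wpos by (simp add: power_divide)
  have partA: "(\<Sum>i<d. (vnorm (A i *\<^sub>v \<psi> - complex_of_real (lam i) \<cdot>\<^sub>v \<psi>))\<^sup>2) = s\<^sup>2 * (\<Sum>i<d. aa i l)"
    unfolding sum_distrib_left
  proof (intro sum.cong refl)
    fix i assume "i \<in> {..<d}"
    hence i: "i < d" by simp
    show "(vnorm (A i *\<^sub>v \<psi> - complex_of_real (lam i) \<cdot>\<^sub>v \<psi>))\<^sup>2 = s\<^sup>2 * aa i l"
      unfolding \<psi>_def aa_def shiftA_def w_def[symmetric] by (rule scale_shift[OF Ac[OF i] wc])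
  qed
  have partB: "(vnorm (B *\<^sub>v \<psi> - \<nu> \<cdot>\<^sub>v \<psi>))\<^sup>2 = s\<^sup>2 * bP l"
    unfolding \<psi>_def bP_def shiftB_def w_def[symmetric] by (rule scale_shift[OF assms(6) wc])
  have partQ: "(vnorm (adj B *\<^sub>v \<psi> - cnj \<nu> \<cdot>\<^sub>v \<psi>))\<^sup>2 = s\<^sup>2 * bQ l"
    unfolding \<psi>_def bQ_def shiftB_def w_def[symmetric] adj_shift[OF assms(6)]
    by (rule scale_shift[OF adj_carrier[OF assms(6)] wc])
  have tot: "s\<^sup>2 * qq l \<le> real (2*m) * (\<epsilon>\<^sub>1\<^sup>2 + \<epsilon>\<^sub>2)"
  proof -
    have "s\<^sup>2 * qq l \<le> s\<^sup>2 * (?C * vb l)" using l(3) by (intro mult_left_mono) auto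
    also have "\<dots> = ?C" using s2 by (simp add: algebra_simps)
    finally show ?thesis using C2 by linarith
  qed
  have sq: "\<And>x. x \<le> real (2*m) * (\<epsilon>\<^sub>1\<^sup>2 + \<epsilon>\<^sub>2) \<Longrightarrow> sqrt x \<le> sqrt (real (2*m)) * sqrt (\<epsilon>\<^sub>1\<^sup>2 + \<epsilon>\<^sub>2)"
    by (simp add: real_sqrt_mult[symmetric])
  show ?thesis
  proof (intro bexI[OF _ \<psi>c] conjI \<psi>1)
    show "sqrt ((\<Sum>i<d. (vnorm (A i *\<^sub>v \<psi> - complex_of_real (lam i) \<cdot>\<^sub>v \<psi>))\<^sup>2)
           + (vnorm (B *\<^sub>v \<psi> - \<nu> \<cdot>\<^sub>v \<psi>))\<^sup>2)
       \<le> sqrt (real (2*m)) * sqrt (\<epsilon>\<^sub>1\<^sup>2 + \<epsilon>\<^sub>2)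
     \<or> sqrt ((\<Sum>i<d. (vnorm (A i *\<^sub>v \<psi> - complex_of_real (lam i) \<cdot>\<^sub>v \<psi>))\<^sup>2)
           + (vnorm (adj B *\<^sub>v \<psi> - cnj \<nu> \<cdot>\<^sub>v \<psi>))\<^sup>2)
       \<le> sqrt (real (2*m)) * sqrt (\<epsilon>\<^sub>1\<^sup>2 + \<epsilon>\<^sub>2)"
    proof (cases "l < m")
      case True
      have "(\<Sum>i<d. (vnorm (A i *\<^sub>v \<psi> - complex_of_real (lam i) \<cdot>\<^sub>v \<psi>))\<^sup>2) + (vnorm (B *\<^sub>v \<psi> - \<nu> \<cdot>\<^sub>v \<psi>))\<^sup>2
          = s\<^sup>2 * qq l" unfolding partA partB using True by (simp add: algebra_simps)
      thus ?thesis using tot sq by auto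
    next
      case False
      have "(\<Sum>i<d. (vnorm (A i *\<^sub>v \<psi> - complex_of_real (lam i) \<cdot>\<^sub>v \<psi>))\<^sup>2) + (vnorm (adj B *\<^sub>v \<psi> - cnj \<nu> \<cdot>\<^sub>v \<psi>))\<^sup>2
          = s\<^sup>2 * qq l" unfolding partA partQ using False by (simp add: algebra_simps)
      thus ?thesis using tot sq by auto
    qed
  qed
qed

end
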